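(* For any positive integers $k,l$, $$\zeta^t(k+1,\{1\}^{l-1})=\sum_{j=1}^{\min\{k,l\}}(-1)^{j-1}\sum_{\substack{k_1+\cdots+k_j=k,\ l_1+\cdots+l_j=l\\ k_i,l_i\ge1}}\frac{1-t^{l_j}}{1-t}\,Z^t\big(x^{k_1+l_1-1}(-tx+y)\cdots x^{k_{j-1}+l_{j-1}-1}(-tx+y)x^{k_j+l_j-1}y\big),$$ or equivalently $$\zeta^t(k+1,\{1\}^{l-1})=\sum_{j=1}^{\min\{k,l\}}(-1)^{j-1}\sum_{\substack{k_1+\cdots+k_j=k,\ l_1+\cdots+l_j=l\\ k_i,l_i\ge1}}\frac{1-t^{l_j}}{1-t}\,\zeta(k_1+l_1,\ldots,k_j+l_j).$$ In particular, $$\zeta^\star(k+1,\{1\}^{l-1})=\sum_{j=1}^{\min\{k,l\}}(-1)^{j-1}\sum_{\substack{k_1+\cdots+k_j=k,\ l_1+\cdots+l_j=l\\ k_i,l_i\ge1}}l_j\,\zeta(k_1+l_1,\ldots,k_j+l_j).$$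
   Context: $\{1\}^{m}$ denotes $m$ repetitions of $1$; $\frac{1-t^{l_j}}{1-t}$ means the polynomial $1+t+\cdots+t^{l_j-1}$. For positive integers with $k_1\ge2$, $\zeta(k_1,\ldots,k_n)=\sum_{m_1>\cdots>m_n>0}\prod m_j^{-k_j}$, $\zeta^\star(k_1,\ldots,k_n)=\sum_{m_1\ge\cdots\ge m_n>0}\prod m_j^{-k_j}$, and $\zeta^t(k_1,\ldots,k_n)=\sum_{\mathbf p}t^{n-\mathrm{dep}(\mathbf p)}\zeta(\mathbf p)$ over all sequences $\mathbf p$ obtained from $(k_1,\ldots,k_n)$ by replacing each separating comma by a comma or a plus sign ($\mathrm{dep}$ = length). $\mathfrak{h}_t=\mathbb{Q}[t]\langle x,y\rangle$, $\mathfrak{h}^0_t=\mathbb{Q}[t]+x\mathfrak{h}_ty$, $z_k=x^{k-1}y$. $\sigma_t$ is the algebra automorphism with $x\mapsto x,y\mapsto tx+y$; $S_t$ is $\mathbb{Q}[t]$-linear with $S_t(1)=1$, $S_t(wa)=\sigma_t(w)a$ for words $w$, letters $a$. $Z:\mathfrak{h}^0_t\to\mathbb{R}[t]$ is $\mathbb{Q}[t]$-linear with $Z(1)=1$, $Z(z_{k_1}\cdots z_{k_n})=\zeta(k_1,\ldots,k_n)$, and $Z^t=Z\circ S_t$. *)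

theory Defs
  imports "HOL-Analysis.Analysis" "HOL-Computational_Algebra.Polynomial"
begin

text \<open>zeta(k_1,...,k_n) = sum over m_1 > ... > m_n > 0 of prod m_i^(-k_i).
  The summands are nonnegative; for admissible indices (k_1 \<ge> 2) the sum converges.\<close>
definition mzv :: "nat list \<Rightarrow> real" where
  "mzv ks = infsum (\<lambda>ms. \<Prod>i<length ks. 1 / (real (ms ! i)) ^ (ks ! i))
     {ms. length ms = length ks \<and> sorted_wrt (>) ms \<and> (\<forall>m\<in>set ms. 0 < m)}"

definition mzv_star :: "nat list \<Rightarrow> real" where
  "mzv_star ks = infsum (\<lambda>ms. \<Prod>i<length ks. 1 / (real (ms ! i)) ^ (ks ! i))
     {ms. length ms = length ks \<and> sorted_wrt (\<ge>) ms \<and> (\<forall>m\<in>set ms. 0 < m)}"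

text \<open>All index sequences obtained from ks by replacing each comma by a comma or a plus,
  paired with the number of plus signs used (= n - dep p).\<close>
fun merges :: "nat list \<Rightarrow> (nat list \<times> nat) list" where
  "merges [] = [([], 0)]"
| "merges [k] = [([k], 0)]"
| "merges (k # k' # ks) =
     map (\<lambda>(p, c). (k # p, c)) (merges (k' # ks)) @
     map (\<lambda>(p, c). ((k + hd p) # tl p, Suc c)) (merges (k' # ks))"

definition zeta_t :: "nat list \<Rightarrow> real poly" where
  "zeta_t ks = (\<Sum>(p, c) \<leftarrow> merges ks. monom (mzv p) c)"

datatype letter = X | Y

text \<open>Elements of h_t represented as finite formal combinations (coefficient, word).\<close>
type_synonym comb = "(real poly \<times> letter list) list"

definition cmul :: "comb \<Rightarrow> comb \<Rightarrow> comb" where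
  "cmul a b = concat (map (\<lambda>(c, v). map (\<lambda>(d, w). (c * d, v @ w)) b) a)"

text \<open>sigma_t: x \<mapsto> x, y \<mapsto> t x + y, applied to a word.\<close>
fun sigma_t :: "letter list \<Rightarrow> comb" where
  "sigma_t [] = [(1, [])]"
| "sigma_t (X # w) = map (\<lambda>(c, v). (c, X # v)) (sigma_t w)"
| "sigma_t (Y # w) = map (\<lambda>(c, v). (c * [:0, 1:], X # v)) (sigma_t w) @
                     map (\<lambda>(c, v). (c, Y # v)) (sigma_t w)"

definition S_t :: "letter list \<Rightarrow> comb" where
  "S_t w = (if w = [] then [(1, [])]
            else map (\<lambda>(c, v). (c, v @ [last w])) (sigma_t (butlast w)))"

text \<open>Reading off indices of a word z_{k_1}...z_{k_n} (z_k = x^{k-1} y).\<close>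
fun word_idx :: "letter list \<Rightarrow> nat \<Rightarrow> nat list" where
  "word_idx [] c = []"
| "word_idx (X # w) c = word_idx w (Suc c)"
| "word_idx (Y # w) c = Suc c # word_idx w 0"

text \<open>Z on words of h^0 (value 0 on words outside h^0, which never occur below).\<close>
definition Z_word :: "letter list \<Rightarrow> real" where
  "Z_word w = (if w = [] then 1
               else if hd w = X \<and> last w = Y then mzv (word_idx w 0) else 0)"

definition Z_comb :: "comb \<Rightarrow> real poly" where
  "Z_comb a = (\<Sum>(c, w) \<leftarrow> a. c * [:Z_word w:])"

definition Zt_comb :: "comb \<Rightarrow> real poly" where
  "Zt_comb a = (\<Sum>(c, w) \<leftarrow> a. c * Z_comb (S_t w))"

text \<open>The element x^{a_1-1}(-tx+y) ... x^{a_{j-1}-1}(-tx+y) x^{a_j-1} y.\<close>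
definition mty :: comb where
  "mty = [(- [:0, 1:], [X]), (1, [Y])]"

fun elt :: "nat list \<Rightarrow> comb" where
  "elt [] = [(1, [])]"
| "elt [a] = [(1, replicate (a - 1) X @ [Y])]"
| "elt (a # b # rest) = cmul (cmul [(1, replicate (a - 1) X)] mty) (elt (b # rest))"

definition comps :: "nat \<Rightarrow> nat \<Rightarrow> nat list set" where
  "comps j n = {ks. length ks = j \<and> sum_list ks = n \<and> (\<forall>i\<in>set ks. 1 \<le> i)}"

definition geom :: "nat \<Rightarrow> real poly" where
  "geom l = (\<Sum>i<l. monom 1 i)"

end

theory Submission
  imports Defs "HOL-Computational_Algebra.Formal_Laurent_Series" "HOL-Real_Asymp.Real_Asymp"
begin

fun zN :: "nat \<Rightarrow> nat list \<Rightarrow> real" where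
  "zN N [] = 1"
| "zN N (k # ks) = (\<Sum>n = 1..N. zN (n - 1) ks / real n ^ k)"

fun zsN :: "nat \<Rightarrow> nat list \<Rightarrow> real" where
  "zsN N [] = 1"
| "zsN N (k # ks) = (\<Sum>n = 1..N. zsN n ks / real n ^ k)"

definition zt :: "real \<Rightarrow> nat \<Rightarrow> nat list \<Rightarrow> real" where
  "zt t N ks = (\<Sum>(p, c) \<leftarrow> merges ks. t ^ c * zN N p)"

lemma zN_Suc: "zN (Suc n) (k # ks) = zN n (k # ks) + zN n ks / real (Suc n) ^ k"
  by simp

lemma zN_diff: "1 \<le> n \<Longrightarrow> zN n (k # ks) - zN (n - 1) (k # ks) = zN (n - 1) ks / real n ^ k"
  by (cases n) auto

lemma merges_nonempty: "(p, c) \<in> set (merges ks) \<Longrightarrow> ks \<noteq> [] \<Longrightarrow> p \<noteq> []"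
proof (induction ks arbitrary: p c rule: merges.induct)
  case 1 then show ?case by simp
next
  case (2 k) then show ?case by simp
next
  case (3 k k' ks)
  then show ?case by auto
qed

lemma sum_list_sum_swap:
  "(\<Sum>x \<leftarrow> xs. \<Sum>n\<in>A. f x n) = (\<Sum>n\<in>A. \<Sum>x \<leftarrow> xs. f x n)"
  by (induction xs) (auto simp: sum.distrib)

lemma sum_list_div_const: "(\<Sum>x \<leftarrow> xs. f x / (d::real)) = (\<Sum>x \<leftarrow> xs. f x) / d"
  by (induction xs) (auto simp: add_divide_distrib)

lemma zt_Nil [simp]: "zt t N [] = 1"
  by (simp add: zt_def)

lemma zt_cons:
  "zt t N (k # ks) = (\<Sum>n = 1..N. ((1 - t) * zt t (n - 1) ks + t * zt t n ks) / real n ^ k)"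
proof (cases ks)
  case Nil
  then show ?thesis by (simp add: zt_def algebra_simps)
next
  case (Cons k' ks')
  define M where "M = merges (k' # ks')"
  have ne: "\<And>q c. (q, c) \<in> set M \<Longrightarrow> q \<noteq> []"
    using merges_nonempty M_def by blast
  have "zt t N (k # ks) = (\<Sum>x \<leftarrow> M. (case x of (q, c) \<Rightarrow> t ^ c * zN N (k # q))
            + (case x of (q, c) \<Rightarrow> t ^ Suc c * zN N ((k + hd q) # tl q)))"
    unfolding zt_def Cons M_def[symmetric]
    by (simp add: M_def sum_list_addf o_def case_prod_beta)
  also have "\<dots> = (\<Sum>x \<leftarrow> M. \<Sum>n = 1..N. (case x of (q, c) \<Rightarrow>
        ((1 - t) * (t ^ c * zN (n - 1) q) + t * (t ^ c * zN n q)) / real n ^ k))"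
  proof (rule arg_cong[where f = sum_list], rule map_cong[OF refl])
    fix x assume x: "x \<in> set M"
    obtain q c where qc: "x = (q, c)" by (cases x)
    with ne x have "q \<noteq> []" by auto
    then obtain a r where q: "q = a # r" by (cases q) auto
    have "zN N ((k + a) # r) = (\<Sum>n = 1..N. (zN n q - zN (n - 1) q) / real n ^ k)"
      unfolding zN.simps
    proof (rule sum.cong[OF refl])
      fix n assume "n \<in> {1..N}"
      then have "1 \<le> n" by simp
      then show "zN (n - 1) r / real n ^ (k + a) = (zN n q - zN (n - 1) q) / real n ^ k"
        using zN_diff[of n a r] by (simp add: q power_add)
    qed
    then have e2: "zN N ((k + hd q) # tl q) = (\<Sum>n = 1..N. (zN n q - zN (n - 1) q) / real n ^ k)"
      by (simp only: q list.sel)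
    have e1: "zN N (k # q) = (\<Sum>n = 1..N. zN (n - 1) q / real n ^ k)"
      by (simp only: zN.simps)
    show "(case x of (q, c) \<Rightarrow> t ^ c * zN N (k # q)) + (case x of (q, c) \<Rightarrow> t ^ Suc c * zN N ((k + hd q) # tl q))
       = (\<Sum>n = 1..N. case x of (q, c) \<Rightarrow> ((1 - t) * (t ^ c * zN (n - 1) q) + t * (t ^ c * zN n q)) / real n ^ k)"
      unfolding qc prod.case e1 e2
      by (simp add: sum_distrib_left sum.distrib[symmetric] sum_subtractf[symmetric] field_simps)
  qed
  also have "\<dots> = (\<Sum>n = 1..N. \<Sum>x \<leftarrow> M. (case x of (q, c) \<Rightarrow>
        ((1 - t) * (t ^ c * zN (n - 1) q) + t * (t ^ c * zN n q)) / real n ^ k))"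
    by (rule sum_list_sum_swap)
  also have "\<dots> = (\<Sum>n = 1..N. ((1 - t) * zt t (n - 1) ks + t * zt t n ks) / real n ^ k)"
  proof (rule sum.cong[OF refl])
    fix n
    have "(\<Sum>x \<leftarrow> M. (case x of (q, c) \<Rightarrow>
        ((1 - t) * (t ^ c * zN (n - 1) q) + t * (t ^ c * zN n q)) / real n ^ k))
      = (\<Sum>x \<leftarrow> M. ((1 - t) * (case x of (q, c) \<Rightarrow> t ^ c * zN (n - 1) q)
           + t * (case x of (q, c) \<Rightarrow> t ^ c * zN n q)) / real n ^ k)"
      by (rule arg_cong[where f = sum_list], rule map_cong) (auto split: prod.splits)
    also have "\<dots> = ((1 - t) * zt t (n - 1) ks + t * zt t n ks) / real n ^ k"
      unfolding zt_def Cons M_def[symmetric]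
      by (simp add: sum_list_div_const sum_list_addf sum_list_const_mult o_def split_def)
    finally show "(\<Sum>x \<leftarrow> M. (case x of (q, c) \<Rightarrow>
        ((1 - t) * (t ^ c * zN (n - 1) q) + t * (t ^ c * zN n q)) / real n ^ k))
      = ((1 - t) * zt t (n - 1) ks + t * zt t n ks) / real n ^ k" .
  qed
  finally show ?thesis .
qed

lemma zt_one: "zt 1 N ks = zsN N ks"
proof (induction ks arbitrary: N)
  case Nil then show ?case by simp
next
  case (Cons k ks) then show ?case by (simp add: zt_cons)
qed

lemma merges_Cons2:
  "(p, c) \<in> set (merges (k # k' # ks)) \<Longrightarrow>
    (\<exists>q. (q, c) \<in> set (merges (k' # ks)) \<and> p = k # q) \<or>
    (\<exists>q c'. (q, c') \<in> set (merges (k' # ks)) \<and> p = (k + hd q) # tl q)"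
proof -
  assume "(p, c) \<in> set (merges (k # k' # ks))"
  then have "(p, c) \<in> (\<lambda>(p, c). (k # p, c)) ` set (merges (k' # ks)) \<or>
             (p, c) \<in> (\<lambda>(p, c). ((k + hd p) # tl p, Suc c)) ` set (merges (k' # ks))"
    by simp
  then show ?thesis
  proof
    assume "(p, c) \<in> (\<lambda>(p, c). (k # p, c)) ` set (merges (k' # ks))"
    then obtain x where x: "x \<in> set (merges (k' # ks))" "(p, c) = (\<lambda>(p, c). (k # p, c)) x" by (rule imageE)
    obtain q c0 where "x = (q, c0)" by (cases x)
    with x show ?thesis by auto
  next
    assume "(p, c) \<in> (\<lambda>(p, c). ((k + hd p) # tl p, Suc c)) ` set (merges (k' # ks))"
    then obtain x where x: "x \<in> set (merges (k' # ks))" "(p, c) = (\<lambda>(p, c). ((k + hd p) # tl p, Suc c)) x" by (rule imageE)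
    obtain q c0 where "x = (q, c0)" by (cases x)
    with x show ?thesis by auto
  qed
qed

lemma merges_ge1: "(p, c) \<in> set (merges ks) \<Longrightarrow> \<forall>x\<in>set ks. 1 \<le> x \<Longrightarrow> \<forall>y\<in>set p. 1 \<le> y"
proof (induction ks arbitrary: p c rule: merges.induct)
  case 1 then show ?case by simp
next
  case (2 k) then show ?case by simp
next
  case (3 k k' ks)
  have pr: "\<forall>x\<in>set (k' # ks). 1 \<le> x" using "3.prems"(2) by simp
  have k1: "1 \<le> k" using "3.prems"(2) by simp
  from merges_Cons2[OF "3.prems"(1)] show ?case
  proof (elim disjE exE conjE)
    fix q assume a: "(q, c) \<in> set (merges (k' # ks))" "p = k # q"
    have hq: "\<forall>y\<in>set q. 1 \<le> y" using "3.IH"(1)[OF a(1) pr] .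
    show ?thesis using hq k1 a(2) by simp
  next
    fix q c' assume a: "(q, c') \<in> set (merges (k' # ks))" "p = (k + hd q) # tl q"
    have hq: "\<forall>y\<in>set q. 1 \<le> y" using "3.IH"(1)[OF a(1) pr] .
    have "q \<noteq> []" using a merges_nonempty by blast
    then obtain x r where q: "q = x # r" by (cases q) auto
    show ?thesis using hq k1 a(2) q by simp
  qed
qed

lemma merges_hd: "(p, c) \<in> set (merges (k # ks)) \<Longrightarrow> p \<noteq> [] \<and> k \<le> hd p"
proof (cases ks)
  case Nil
  assume "(p, c) \<in> set (merges (k # ks))"
  then show ?thesis using Nil by simp
next
  case (Cons k' ks')
  assume h: "(p, c) \<in> set (merges (k # ks))"
  from merges_Cons2[OF h[unfolded Cons]] show ?thesis
    by (elim disjE exE conjE) auto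
qed

lemma zN_nonneg: "0 \<le> zN N ks"
  by (induction ks arbitrary: N) (auto intro!: sum_nonneg)

lemma zN_mono: "M \<le> N \<Longrightarrow> zN M ks \<le> zN N ks"
proof (cases ks)
  case (Cons k ks')
  assume "M \<le> N"
  then show ?thesis unfolding Cons zN.simps
    by (intro sum_mono2) (auto intro!: divide_nonneg_nonneg zN_nonneg)
qed simp

lemma sum_triangle_swap:
  fixes N :: nat shows "(\<Sum>n = 1..N. \<Sum>m = 1..n - 1. a m * (b n :: real)) = (\<Sum>m = 1..N. a m * (\<Sum>n = m + 1..N. b n))"
proof (induction N)
  case 0 then show ?case by simp
next
  case (Suc N)
  have "(\<Sum>m = 1..Suc N. a m * (\<Sum>n = m + 1..Suc N. b n))
      = (\<Sum>m = 1..N. a m * (\<Sum>n = m + 1..Suc N. b n))"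
    by (simp add: sum.cl_ivl_Suc)
  also have "\<dots> = (\<Sum>m = 1..N. a m * (\<Sum>n = m + 1..N. b n)) + (\<Sum>m = 1..N. a m) * b (Suc N)"
    by (simp add: sum.cl_ivl_Suc sum_distrib_right sum.distrib distrib_left)
  finally show ?case using Suc by (simp add: sum.cl_ivl_Suc sum_distrib_right)
qed

lemma inv_sq_tail: "1 \<le> m \<Longrightarrow> m \<le> N \<Longrightarrow> (\<Sum>n = m + 1..N. 1 / real n ^ 2) \<le> 1 / m - 1 / N"
proof (induction N)
  case 0 then show ?case by simp
next
  case (Suc N)
  show ?case
  proof (cases "m = Suc N")
    case True then show ?thesis by simp
  next
    case False
    with Suc have IH: "(\<Sum>n = m + 1..N. 1 / real n ^ 2) \<le> 1 / m - 1 / N" by simp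
    have N1: "1 \<le> N" using False Suc by simp
    have e: "1 / real N - 1 / Suc N = 1 / (real N * Suc N)"
      using N1 by (simp add: field_simps)
    have "1 / real (Suc N) ^ 2 \<le> 1 / (real N * Suc N)"
      using N1 by (intro divide_left_mono) (auto simp: power2_eq_square)
    then have "1 / real (Suc N) ^ 2 \<le> 1 / N - 1 / Suc N" using e by simp
    then show ?thesis using IH False Suc.prems by (simp add: sum.cl_ivl_Suc)
  qed
qed

lemma inv_sq_tail': "1 \<le> m \<Longrightarrow> (\<Sum>n = m + 1..N. 1 / real n ^ 2) \<le> 1 / m"
proof (cases "m \<le> N")
  case True
  assume "1 \<le> m"
  then show ?thesis using inv_sq_tail[OF _ True] by (smt (verit) of_nat_0_le_iff divide_nonneg_nonneg)
qed simp

lemma zN_bound: "2 \<le> k \<Longrightarrow> \<forall>x\<in>set ks. 1 \<le> x \<Longrightarrow> zN N (k # ks) \<le> 2"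
proof (induction ks arbitrary: k N)
  case Nil
  have "zN N [k] \<le> (\<Sum>n = 1..N. 1 / real n ^ 2)"
    using Nil by (auto intro!: sum_mono simp: divide_simps power_increasing)
  also have "\<dots> \<le> 2"
  proof (cases N)
    case (Suc N')
    have "(\<Sum>n = 1..N. 1 / real n ^ 2) = 1 + (\<Sum>n = 1 + 1..N. 1 / real n ^ 2)"
      using Suc by (simp add: sum.atLeast_Suc_atMost)
    also have "\<dots> \<le> 2" using inv_sq_tail'[of 1 N] by simp
    finally show ?thesis .
  qed simp
  finally show ?case .
next
  case (Cons k' ks)
  have "zN N (k # k' # ks) \<le> (\<Sum>n = 1..N. \<Sum>m = 1..n - 1. zN (m - 1) ks / real m * (1 / real n ^ 2))"
    unfolding zN.simps sum_divide_distrib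
  proof (intro sum_mono)
    fix n m assume n: "n \<in> {1..N}" and m: "m \<in> {1..n - 1}"
    have mm: "real m ^ 1 \<le> real m ^ k'"
      using Cons.prems m by (intro power_increasing) auto
    have h1: "zN (m - 1) ks / real m ^ k' \<le> zN (m - 1) ks / real m"
      using m zN_nonneg[of "m - 1" ks] mm
      by (intro divide_left_mono) auto
    have h2: "1 / real n ^ k \<le> 1 / real n ^ 2"
      using Cons.prems n by (auto simp: divide_simps power_increasing)
    have h3: "0 \<le> zN (m - 1) ks / real m ^ k'" "0 \<le> 1 / real n ^ 2"
      using zN_nonneg[of "m - 1" ks] by auto
    have "zN (m - 1) ks / real m ^ k' / real n ^ k = (zN (m - 1) ks / real m ^ k') * (1 / real n ^ k)"
      by simp
    also have "\<dots> \<le> zN (m - 1) ks / real m * (1 / real n ^ 2)"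
      by (rule mult_mono[OF h1 h2]) (use h3 zN_nonneg[of "m - 1" ks] in auto)
    finally show "zN (m - 1) ks / real m ^ k' / real n ^ k \<le> zN (m - 1) ks / real m * (1 / real n ^ 2)" .
  qed
  also have "\<dots> = (\<Sum>m = 1..N. zN (m - 1) ks / real m * (\<Sum>n = m + 1..N. 1 / real n ^ 2))"
    by (rule sum_triangle_swap)
  also have "\<dots> \<le> (\<Sum>m = 1..N. zN (m - 1) ks / real m * (1 / real m))"
    by (intro sum_mono mult_left_mono inv_sq_tail') (auto intro!: divide_nonneg_nonneg zN_nonneg)
  also have "\<dots> = zN N (2 # ks)"
    by (simp add: power2_eq_square)
  also have "\<dots> \<le> 2"
    using Cons.IH[of 2 N] Cons.prems by simp
  finally show ?case .
qed

definition strA :: "nat \<Rightarrow> nat \<Rightarrow> nat list set" where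
  "strA d N = {ms. length ms = d \<and> sorted_wrt (>) ms \<and> (\<forall>m\<in>set ms. 0 < m) \<and> (\<forall>m\<in>set ms. m \<le> N)}"

definition wkA :: "nat \<Rightarrow> nat \<Rightarrow> nat list set" where
  "wkA d N = {ms. length ms = d \<and> sorted_wrt (\<ge>) ms \<and> (\<forall>m\<in>set ms. 0 < m) \<and> (\<forall>m\<in>set ms. m \<le> N)}"

definition fw :: "nat list \<Rightarrow> nat list \<Rightarrow> real" where
  "fw ks ms = (\<Prod>i<length ks. 1 / (real (ms ! i)) ^ (ks ! i))"

lemma fw_Cons: "fw (k # ks) (n # ms) = fw ks ms / real n ^ k"
  unfolding fw_def length_Cons prod.lessThan_Suc_shift by simp

lemma fw_nonneg: "0 \<le> fw ks ms"
  by (simp add: fw_def prod_nonneg)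

lemma finite_strA: "finite (strA d N)"
proof -
  have "strA d N \<subseteq> {xs. set xs \<subseteq> {..N} \<and> length xs = d}"
    by (auto simp: strA_def)
  then show ?thesis using finite_lists_length_eq[of "{..N}" d] finite_subset by blast
qed

lemma finite_wkA: "finite (wkA d N)"
proof -
  have "wkA d N \<subseteq> {xs. set xs \<subseteq> {..N} \<and> length xs = d}"
    by (auto simp: wkA_def)
  then show ?thesis using finite_lists_length_eq[of "{..N}" d] finite_subset by blast
qed

lemma strA_Suc: "strA (Suc d) N = (\<lambda>(n, ms). n # ms) ` (SIGMA n:{1..N}. strA d (n - 1))"
proof (rule set_eqI)
  fix xs
  show "xs \<in> strA (Suc d) N \<longleftrightarrow> xs \<in> (\<lambda>(n, ms). n # ms) ` (SIGMA n:{1..N}. strA d (n - 1))"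
  proof
    assume h: "xs \<in> strA (Suc d) N"
    then obtain n ms where xs: "xs = n # ms" unfolding strA_def by (cases xs) auto
    have "(n, ms) \<in> (SIGMA n:{1..N}. strA d (n - 1))"
      using h unfolding xs strA_def by fastforce
    then show "xs \<in> (\<lambda>(n, ms). n # ms) ` (SIGMA n:{1..N}. strA d (n - 1))"
      unfolding xs by (rule rev_image_eqI) simp
  next
    assume "xs \<in> (\<lambda>(n, ms). n # ms) ` (SIGMA n:{1..N}. strA d (n - 1))"
    then obtain n ms where xs: "xs = n # ms" and h: "n \<in> {1..N}" "ms \<in> strA d (n - 1)" by auto
    then show "xs \<in> strA (Suc d) N" unfolding strA_def by fastforce
  qed
qed

lemma wkA_Suc: "wkA (Suc d) N = (\<lambda>(n, ms). n # ms) ` (SIGMA n:{1..N}. wkA d n)"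
proof (rule set_eqI)
  fix xs
  show "xs \<in> wkA (Suc d) N \<longleftrightarrow> xs \<in> (\<lambda>(n, ms). n # ms) ` (SIGMA n:{1..N}. wkA d n)"
  proof
    assume h: "xs \<in> wkA (Suc d) N"
    then obtain n ms where xs: "xs = n # ms" unfolding wkA_def by (cases xs) auto
    have "(n, ms) \<in> (SIGMA n:{1..N}. wkA d n)"
      using h unfolding xs wkA_def by fastforce
    then show "xs \<in> (\<lambda>(n, ms). n # ms) ` (SIGMA n:{1..N}. wkA d n)"
      unfolding xs by (rule rev_image_eqI) simp
  next
    assume "xs \<in> (\<lambda>(n, ms). n # ms) ` (SIGMA n:{1..N}. wkA d n)"
    then obtain n ms where xs: "xs = n # ms" and h: "n \<in> {1..N}" "ms \<in> wkA d n" by auto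
    then show "xs \<in> wkA (Suc d) N" unfolding wkA_def by fastforce
  qed
qed

lemma inj_Cons_pair: "inj_on (\<lambda>(n, ms). n # ms) A"
  by (auto simp: inj_on_def)

lemma sum_strA: "sum (fw ks) (strA (length ks) N) = zN N ks"
proof (induction ks arbitrary: N)
  case Nil
  have "strA 0 N = {[]}" by (auto simp: strA_def)
  then show ?case by (simp add: fw_def)
next
  case (Cons k ks)
  have "sum (fw (k # ks)) (strA (length (k # ks)) N)
      = (\<Sum>(n, ms)\<in>(SIGMA n:{1..N}. strA (length ks) (n - 1)). fw (k # ks) (n # ms))"
    unfolding length_Cons strA_Suc by (subst sum.reindex[OF inj_Cons_pair]) (simp add: o_def case_prod_unfold)
  also have "\<dots> = (\<Sum>n = 1..N. \<Sum>ms\<in>strA (length ks) (n - 1). fw ks ms / real n ^ k)"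
    by (subst sum.Sigma[symmetric]) (auto simp: finite_strA fw_Cons)
  also have "\<dots> = zN N (k # ks)"
    by (simp add: sum_divide_distrib[symmetric] Cons.IH)
  finally show ?case .
qed

lemma sum_wkA: "sum (fw ks) (wkA (length ks) N) = zsN N ks"
proof (induction ks arbitrary: N)
  case Nil
  have "wkA 0 N = {[]}" by (auto simp: wkA_def)
  then show ?case by (simp add: fw_def)
next
  case (Cons k ks)
  have "sum (fw (k # ks)) (wkA (length (k # ks)) N)
      = (\<Sum>(n, ms)\<in>(SIGMA n:{1..N}. wkA (length ks) n). fw (k # ks) (n # ms))"
    unfolding length_Cons wkA_Suc by (subst sum.reindex[OF inj_Cons_pair]) (simp add: o_def case_prod_unfold)
  also have "\<dots> = (\<Sum>n = 1..N. \<Sum>ms\<in>wkA (length ks) n. fw ks ms / real n ^ k)"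
    by (subst sum.Sigma[symmetric]) (auto simp: finite_wkA fw_Cons)
  also have "\<dots> = zsN N (k # ks)"
    by (simp add: sum_divide_distrib[symmetric] Cons.IH)
  finally show ?case .
qed

lemma infsum_exhaust:
  fixes g :: "'a \<Rightarrow> real" and S' :: "nat \<Rightarrow> 'a set"
  assumes nn: "\<And>x. x \<in> S \<Longrightarrow> 0 \<le> g x"
    and sub: "\<And>N. S' N \<subseteq> S" and fin: "\<And>N. finite (S' N)"
    and mono: "\<And>N. S' N \<subseteq> S' (Suc N)"
    and exh: "\<And>F. finite F \<Longrightarrow> F \<subseteq> S \<Longrightarrow> \<exists>N. F \<subseteq> S' N"
    and bd: "\<And>N. sum g (S' N) \<le> B"
  shows "(\<lambda>N. sum g (S' N)) \<longlonglongrightarrow> infsum g S"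
proof -
  define a where "a N = sum g (S' N)" for N
  have monoS: "M \<le> N \<Longrightarrow> S' M \<subseteq> S' N" for M N
    using lift_Suc_mono_le[of S', OF mono] by simp
  have nn': "\<And>N x. x \<in> S' N \<Longrightarrow> 0 \<le> g x" using nn sub by (meson subsetD)
  have inc: "incseq a"
    unfolding incseq_def a_def
  proof (intro allI impI sum_mono2)
    fix M N :: nat assume "M \<le> N"
    then show "S' M \<subseteq> S' N" by (rule monoS)
  qed (use fin nn' in auto)
  have Fle: "sum g F \<le> a N" if FS: "F \<subseteq> S' N" "finite F" for F N
    unfolding a_def by (rule sum_mono2) (use FS fin nn' in auto)
  have Fbd: "sum g F \<le> B" if F12: "finite F" "F \<subseteq> S" for F
  proof -
    obtain N where "F \<subseteq> S' N" using exh[OF F12] by (elim exE)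
    then show ?thesis using Fle[of F N] bd[of N] F12 unfolding a_def by simp
  qed
  have bdd: "bdd_above (sum g ` {F. F \<subseteq> S \<and> finite F})"
    by (rule bdd_aboveI[of _ B]) (use Fbd in auto)
  have summ: "g summable_on S"
    by (rule nonneg_bdd_above_summable_on[OF _ bdd]) (use nn in auto)
  have inf: "infsum g S = (SUP F\<in>{F. finite F \<and> F \<subseteq> S}. sum g F)"
    by (rule infsum_nonneg_is_SUPREMUM_real[OF summ nn])
  have bdd': "bdd_above (sum g ` {F. finite F \<and> F \<subseteq> S})"
    using bdd by (simp add: conj_commute)
  have bdda: "bdd_above (range a)"
    by (rule bdd_aboveI[of _ B]) (use bd a_def in auto)
  have lim: "a \<longlonglongrightarrow> (SUP N. a N)"
    by (rule LIMSEQ_incseq_SUP[OF bdda inc])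
  have "(SUP N. a N) = (SUP F\<in>{F. finite F \<and> F \<subseteq> S}. sum g F)"
  proof (rule antisym)
    show "(SUP N. a N) \<le> (SUP F\<in>{F. finite F \<and> F \<subseteq> S}. sum g F)"
    proof (rule cSUP_least)
      fix N
      show "a N \<le> (SUP F\<in>{F. finite F \<and> F \<subseteq> S}. sum g F)"
        unfolding a_def by (rule cSUP_upper[OF _ bdd']) (use fin sub in auto)
    qed simp
    show "(SUP F\<in>{F. finite F \<and> F \<subseteq> S}. sum g F) \<le> (SUP N. a N)"
    proof (rule cSUP_least)
      show "{F. finite F \<and> F \<subseteq> S} \<noteq> {}" by auto
      fix F assume "F \<in> {F. finite F \<and> F \<subseteq> S}"
      then have FF: "finite F" "F \<subseteq> S" by auto
      obtain N where N0: "F \<subseteq> S' N" using exh[OF FF] by (elim exE)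
      have N: "F \<subseteq> S' N" "finite F" using N0 FF by auto
      have "sum g F \<le> a N" using Fle[OF N] .
      also have "a N \<le> (SUP N. a N)" by (rule cSUP_upper[OF _ bdda]) simp
      finally show "sum g F \<le> (SUP N. a N)" .
    qed
  qed
  then have eq2: "infsum g S = (SUP N. a N)" using inf by simp
  have afun: "(\<lambda>N. sum g (S' N)) = a" by (rule ext) (simp add: a_def)
  show ?thesis unfolding afun eq2 by (rule lim)
qed

lemma finite_lists_bound:
  assumes "finite (F :: nat list set)"
  shows "\<exists>N. \<forall>ms\<in>F. \<forall>m\<in>set ms. m \<le> N"
proof -
  have "finite (\<Union>ms\<in>F. set ms)" using assms by auto
  then obtain N where "\<forall>m\<in>(\<Union>ms\<in>F. set ms). m \<le> N"
    using finite_nat_set_iff_bounded_le by blast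
  then show ?thesis by auto
qed

lemma zN_conv:
  assumes "2 \<le> k" "\<forall>x\<in>set ks. 1 \<le> x"
  shows "(\<lambda>N. zN N (k # ks)) \<longlonglongrightarrow> mzv (k # ks)"
proof -
  let ?S = "{ms. length ms = length (k # ks) \<and> sorted_wrt (>) ms \<and> (\<forall>m\<in>set ms. 0 < m)}"
  have "(\<lambda>N. sum (fw (k # ks)) (strA (length (k # ks)) N)) \<longlonglongrightarrow> infsum (fw (k # ks)) ?S"
  proof (rule infsum_exhaust[where B = 2])
    show "\<And>x. 0 \<le> fw (k # ks) x" by (rule fw_nonneg)
    show "\<And>N. strA (length (k # ks)) N \<subseteq> ?S" by (auto simp: strA_def)
    show "\<And>N. finite (strA (length (k # ks)) N)" by (rule finite_strA)
    show "\<And>N. strA (length (k # ks)) N \<subseteq> strA (length (k # ks)) (Suc N)" by (auto simp: strA_def)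
    show "\<exists>N. F \<subseteq> strA (length (k # ks)) N" if F1: "finite F" and F2: "F \<subseteq> ?S" for F
    proof -
      obtain N where "\<forall>ms\<in>F. \<forall>m\<in>set ms. m \<le> N" using finite_lists_bound[OF F1] by blast
      then have "F \<subseteq> strA (length (k # ks)) N" using F2 by (auto simp: strA_def)
      then show ?thesis by (rule exI)
    qed
    show "\<And>N. sum (fw (k # ks)) (strA (length (k # ks)) N) \<le> 2"
      using sum_strA zN_bound assms by metis
  qed
  then have "(\<lambda>N. zN N (k # ks)) \<longlonglongrightarrow> infsum (fw (k # ks)) ?S" by (simp only: sum_strA)
  moreover have "infsum (fw (k # ks)) ?S = mzv (k # ks)" unfolding mzv_def fw_def[abs_def] by (rule refl)
  ultimately show ?thesis by simp
qed

lemma zt_bound: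
  assumes "2 \<le> k" "\<forall>x\<in>set ks. 1 \<le> x"
  shows "zt 1 N (k # ks) \<le> 2 * length (merges (k # ks))"
proof -
  have "zt 1 N (k # ks) = (\<Sum>x \<leftarrow> merges (k # ks). zN N (fst x))"
    by (simp add: zt_def split_def)
  also have "\<dots> \<le> (\<Sum>x \<leftarrow> merges (k # ks). 2)"
  proof (rule sum_list_mono)
    fix x assume x: "x \<in> set (merges (k # ks))"
    obtain p c where xpc: "x = (p, c)" by (cases x)
    have h: "p \<noteq> [] \<and> k \<le> hd p" using merges_hd x xpc by blast
    have g: "\<forall>y\<in>set p. 1 \<le> y" using merges_ge1[of p c "k # ks"] x xpc assms by auto
    obtain a r where p: "p = a # r" using h by (cases p) auto
    show "zN N (fst x) \<le> 2" using zN_bound[of a r N] h g assms(1) unfolding xpc p by simp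
  qed
  also have "\<dots> = 2 * length (merges (k # ks))" by (simp add: sum_list_triv)
  finally show ?thesis .
qed

lemma zsN_conv:
  assumes "2 \<le> k" "\<forall>x\<in>set ks. 1 \<le> x"
  shows "(\<lambda>N. zsN N (k # ks)) \<longlonglongrightarrow> mzv_star (k # ks)"
proof -
  let ?S = "{ms. length ms = length (k # ks) \<and> sorted_wrt (\<ge>) ms \<and> (\<forall>m\<in>set ms. 0 < m)}"
  have "(\<lambda>N. sum (fw (k # ks)) (wkA (length (k # ks)) N)) \<longlonglongrightarrow> infsum (fw (k # ks)) ?S"
  proof (rule infsum_exhaust[where B = "2 * length (merges (k # ks))"])
    show "\<And>x. 0 \<le> fw (k # ks) x" by (rule fw_nonneg)
    show "\<And>N. wkA (length (k # ks)) N \<subseteq> ?S" by (auto simp: wkA_def)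
    show "\<And>N. finite (wkA (length (k # ks)) N)" by (rule finite_wkA)
    show "\<And>N. wkA (length (k # ks)) N \<subseteq> wkA (length (k # ks)) (Suc N)" by (auto simp: wkA_def)
    show "\<exists>N. F \<subseteq> wkA (length (k # ks)) N" if F1: "finite F" and F2: "F \<subseteq> ?S" for F
    proof -
      obtain N where "\<forall>ms\<in>F. \<forall>m\<in>set ms. m \<le> N" using finite_lists_bound[OF F1] by blast
      then have "F \<subseteq> wkA (length (k # ks)) N" using F2 by (auto simp: wkA_def)
      then show ?thesis by (rule exI)
    qed
    show "\<And>N. sum (fw (k # ks)) (wkA (length (k # ks)) N) \<le> 2 * length (merges (k # ks))"
      using sum_wkA zt_bound zt_one assms by metis
  qed
  then have "(\<lambda>N. zsN N (k # ks)) \<longlonglongrightarrow> infsum (fw (k # ks)) ?S" by (simp only: sum_wkA)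
  moreover have "infsum (fw (k # ks)) ?S = mzv_star (k # ks)" unfolding mzv_star_def fw_def[abs_def] by (rule refl)
  ultimately show ?thesis by simp
qed

lemma tendsto_sum_list:
  fixes f :: "nat \<Rightarrow> 'a \<Rightarrow> real"
  assumes "\<And>x. x \<in> set xs \<Longrightarrow> (\<lambda>N. f N x) \<longlonglongrightarrow> g x"
  shows "(\<lambda>N. \<Sum>x \<leftarrow> xs. f N x) \<longlonglongrightarrow> (\<Sum>x \<leftarrow> xs. g x)"
  using assms by (induction xs) (auto intro!: tendsto_add)

lemma zt_conv:
  assumes "2 \<le> k" "\<forall>x\<in>set ks. 1 \<le> x"
  shows "(\<lambda>N. zt t N (k # ks)) \<longlonglongrightarrow> (\<Sum>(p, c) \<leftarrow> merges (k # ks). t ^ c * mzv p)"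
  unfolding zt_def
proof (rule tendsto_sum_list)
  fix x assume x: "x \<in> set (merges (k # ks))"
  obtain p c where xpc: "x = (p, c)" by (cases x)
  have h: "p \<noteq> [] \<and> k \<le> hd p" using merges_hd x xpc by blast
  have g: "\<forall>y\<in>set p. 1 \<le> y" using merges_ge1[of p c "k # ks"] x xpc assms by auto
  obtain a r where p: "p = a # r" using h by (cases p) auto
  show "(\<lambda>N. case x of (p, c) \<Rightarrow> t ^ c * zN N p) \<longlonglongrightarrow> (case x of (p, c) \<Rightarrow> t ^ c * mzv p)"
    unfolding xpc prod.case p
    by (intro tendsto_mult tendsto_const zN_conv) (use h g assms(1) p in auto)
qed

definition gE :: "'a::field_char_0 \<Rightarrow> 'a \<Rightarrow> nat \<Rightarrow> 'a" where
  "gE v t n = (\<Prod>m = 1..n. (of_nat m + (1 - t) * v) / (of_nat m - t * v))"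

definition gC :: "'a::field_char_0 \<Rightarrow> nat \<Rightarrow> nat \<Rightarrow> 'a" where
  "gC v N n = (\<Prod>i<n. of_nat (N - i) / (of_nat (N - i) - v))"

definition gX :: "'a::field_char_0 \<Rightarrow> 'a \<Rightarrow> nat \<Rightarrow> nat \<Rightarrow> 'a" where
  "gX v t N n = v / (of_nat n - t * v) * gE v t (n - 1) * gC v N n"

definition gal :: "'a::field_char_0 \<Rightarrow> nat \<Rightarrow> 'a" where
  "gal v N = v / (of_nat N - v)"

definition gdel :: "'a::field_char_0 \<Rightarrow> 'a \<Rightarrow> nat \<Rightarrow> 'a" where
  "gdel v t N = v * of_nat N / ((of_nat N - v) * (of_nat N - t * v))"

definition gL :: "'a::field_char_0 \<Rightarrow> 'a \<Rightarrow> nat \<Rightarrow> nat \<Rightarrow> 'a" where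
  "gL v t N k = (\<Sum>n = 1..N. gX v t N n / of_nat n ^ k)"

lemma gE_0 [simp]: "gE v t 0 = 1" by (simp add: gE_def)

lemma gE_Suc: "gE v t (Suc n) = gE v t n * ((of_nat (Suc n) + (1 - t) * v) / (of_nat (Suc n) - t * v))"
  by (simp add: gE_def)

lemma gC_0 [simp]: "gC v N 0 = 1" by (simp add: gC_def)

lemma gC_Suc: "gC v N (Suc n) = gC v N n * (of_nat (N - n) / (of_nat (N - n) - v))"
  by (simp add: gC_def)

lemma gC_shift: "gC v (Suc M) (Suc n) = of_nat (Suc M) / (of_nat (Suc M) - v) * gC v M n"
  unfolding gC_def prod.lessThan_Suc_shift by simp

lemma K1_alg1:
  fixes x y A Q v :: "'a::field"
  assumes "Q / (Q - v) * y = x * (A / (A - v))" "A \<noteq> 0" "A - v \<noteq> 0" "Q - v \<noteq> 0"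
  shows "x = y * (Q / (Q - v)) * ((A - v) / A)"
  using assms by (simp add: field_simps)

lemma K1_alg2:
  fixes Q v n :: "'a::field"
  assumes "Q - v \<noteq> 0" "Q - n \<noteq> 0"
  shows "(Q / (Q - v)) * ((Q - n - v) / (Q - n)) = 1 - v / (Q - v) * n / (Q - n)"
  using assms by (simp add: divide_simps) (simp add: algebra_simps)

lemma K2_alg:
  fixes P v t G :: "'a::field"
  assumes "P - v \<noteq> 0" "P - t * v \<noteq> 0"
  shows "v * P / ((P - v) * (P - t * v)) + v / (P - v) * P * (G / (P - t * v) - 1 / (P - t * v))
       = v / (P - t * v) * (P / (P - v) * G)"
  using assms by (simp add: divide_simps) (simp add: algebra_simps)

lemma gosper_alg:
  fixes S1 Ms v t G :: "'a::field"
  assumes "S1 - t * v \<noteq> 0" "Ms \<noteq> 0" "Ms - v \<noteq> 0" "S1 + Ms - t * v \<noteq> 0"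
  shows "G / (S1 + Ms - t * v) + v * G * (Ms / (Ms - v)) / ((S1 - t * v) * Ms)
       = G * ((S1 + (1 - t) * v) / (S1 - t * v)) * (Ms / (Ms - v)) / (S1 + Ms - t * v)"
  using assms by (simp add: divide_simps) (simp add: algebra_simps)

locale gctx =
  fixes v t :: "'a::field_char_0"
  assumes nz1: "\<And>m. 1 \<le> m \<Longrightarrow> (of_nat m :: 'a) - t * v \<noteq> 0"
    and nz2: "\<And>j. 1 \<le> j \<Longrightarrow> (of_nat j :: 'a) - v \<noteq> 0"
begin

lemma nz1': "(of_nat (Suc m) :: 'a) - t * v \<noteq> 0" using nz1[of "Suc m"] by simp
lemma nz2': "(of_nat (Suc m) :: 'a) - v \<noteq> 0" using nz2[of "Suc m"] by simp

lemma K1: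
  assumes n: "1 \<le> n" "n \<le> M"
  shows "gX v t (Suc M) n = gX v t M n * (1 - gal v (Suc M) * of_nat n / (of_nat (Suc M) - of_nat n))"
proof -
  define A :: 'a where "A = of_nat (Suc M - n)"
  define Q :: 'a where "Q = of_nat (Suc M)"
  have a: "gC v (Suc M) (Suc n) = gC v (Suc M) n * (A / (A - v))"
    unfolding A_def by (rule gC_Suc)
  have b: "gC v (Suc M) (Suc n) = Q / (Q - v) * gC v M n"
    unfolding Q_def by (rule gC_shift)
  have d1: "A - v \<noteq> 0" unfolding A_def using nz2[of "Suc M - n"] n by simp
  have d2: "A \<noteq> 0" unfolding A_def of_nat_eq_0_iff using n by simp
  have d3: "Q - v \<noteq> 0" unfolding Q_def by (rule nz2')
  have c: "gC v (Suc M) n = gC v M n * (Q / (Q - v)) * ((A - v) / A)"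
    using K1_alg1[OF a[unfolded b] d2 d1 d3] .
  have e: "A = Q - of_nat n" unfolding A_def Q_def using n by (simp add: of_nat_diff)
  have f: "(Q / (Q - v)) * ((A - v) / A) = 1 - v / (Q - v) * of_nat n / (Q - of_nat n)"
    using K1_alg2[OF d3 d2[unfolded e]] unfolding e .
  show ?thesis unfolding gX_def gal_def Q_def[symmetric] c mult.assoc f[symmetric] by simp
qed

lemma gosper:
  assumes "s \<le> M"
  shows "1 / (of_nat (Suc M) - t * v) + (\<Sum>n = 1..s. v * gE v t (n - 1) * gC v M n / ((of_nat n - t * v) * (of_nat (Suc M) - of_nat n)))
       = gE v t s * gC v M s / (of_nat (Suc M) - t * v)"
  using assms
proof (induction s)
  case 0 then show ?case by simp
next
  case (Suc s)
  have IH: "1 / (of_nat (Suc M) - t * v) + (\<Sum>n = 1..s. v * gE v t (n - 1) * gC v M n / ((of_nat n - t * v) * (of_nat (Suc M) - of_nat n)))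
       = gE v t s * gC v M s / (of_nat (Suc M) - t * v)" using Suc by simp
  have sM: "s < M" using Suc.prems by simp
  define G where "G = gE v t s * gC v M s"
  have d1: "(of_nat (M - s) :: 'a) - v \<noteq> 0" using nz2[of "M - s"] sM by simp
  have d1': "(of_nat M :: 'a) - of_nat s - v \<noteq> 0" using d1 sM by (simp add: of_nat_diff)
  have d2: "(of_nat (Suc s) :: 'a) - t * v \<noteq> 0" by (rule nz1')
  have d3: "(of_nat (Suc M) :: 'a) - t * v \<noteq> 0" by (rule nz1')
  have d4: "(of_nat M :: 'a) - of_nat s \<noteq> 0" using sM by simp
  have cs: "gC v M (Suc s) = gC v M s * ((of_nat M - of_nat s) / (of_nat M - of_nat s - v))"
    using gC_Suc[of v M s] sM by (simp add: of_nat_diff)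
  have es: "gE v t (Suc s) = gE v t s * ((of_nat (Suc s) + (1 - t) * v) / (of_nat (Suc s) - t * v))"
    by (rule gE_Suc)
  have "1 / (of_nat (Suc M) - t * v) + (\<Sum>n = 1..Suc s. v * gE v t (n - 1) * gC v M n / ((of_nat n - t * v) * (of_nat (Suc M) - of_nat n)))
      = gE v t s * gC v M s / (of_nat (Suc M) - t * v)
        + v * gE v t s * gC v M (Suc s) / ((of_nat (Suc s) - t * v) * (of_nat (Suc M) - of_nat (Suc s)))"
    using IH by (simp add: sum.cl_ivl_Suc add.assoc)
  also have "\<dots> = G / (of_nat (Suc M) - t * v)
        + v * G * ((of_nat M - of_nat s) / (of_nat M - of_nat s - v)) / ((of_nat (Suc s) - t * v) * (of_nat M - of_nat s))"
    unfolding cs G_def by (simp add: ac_simps)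
  also have "\<dots> = G * ((of_nat (Suc s) + (1 - t) * v) / (of_nat (Suc s) - t * v)) * ((of_nat M - of_nat s) / (of_nat M - of_nat s - v))
                 / (of_nat (Suc M) - t * v)"
  proof -
    have P: "(of_nat (Suc M) :: 'a) = of_nat (Suc s) + (of_nat M - of_nat s)" by simp
    have P': "(of_nat (Suc M) :: 'a) - of_nat (Suc s) = of_nat M - of_nat s" by simp
    show ?thesis unfolding P' unfolding P
      by (rule gosper_alg) (use d1' d2 d3 d4 P in auto)
  qed
  also have "\<dots> = gE v t (Suc s) * gC v M (Suc s) / (of_nat (Suc M) - t * v)"
    unfolding es cs G_def by (simp add: ac_simps)
  finally show ?case .
qed

lemma K2:
  "gX v t (Suc M) (Suc M) = gdel v t (Suc M) + gal v (Suc M) * of_nat (Suc M) *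
      (\<Sum>n = 1..M. gX v t M n / (of_nat (Suc M) - of_nat n))"
proof -
  have g: "(\<Sum>n = 1..M. gX v t M n / (of_nat (Suc M) - of_nat n))
      = gE v t M * gC v M M / (of_nat (Suc M) - t * v) - 1 / (of_nat (Suc M) - t * v)"
  proof -
    have "(\<Sum>n = 1..M. gX v t M n / (of_nat (Suc M) - of_nat n))
        = (\<Sum>n = 1..M. v * gE v t (n - 1) * gC v M n / ((of_nat n - t * v) * (of_nat (Suc M) - of_nat n)))"
      by (rule sum.cong) (auto simp: gX_def)
    then show ?thesis using gosper[of M M] by (simp add: algebra_simps)
  qed
  have d2: "(of_nat (Suc M) :: 'a) - v \<noteq> 0" by (rule nz2')
  have d3: "(of_nat (Suc M) :: 'a) - t * v \<noteq> 0" by (rule nz1')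
  have c: "gC v (Suc M) (Suc M) = of_nat (Suc M) / (of_nat (Suc M) - v) * gC v M M" by (rule gC_shift)
  have "gdel v t (Suc M) + gal v (Suc M) * of_nat (Suc M) *
      (\<Sum>n = 1..M. gX v t M n / (of_nat (Suc M) - of_nat n))
      = gdel v t (Suc M) + gal v (Suc M) * of_nat (Suc M) *
      (gE v t M * gC v M M / (of_nat (Suc M) - t * v) - 1 / (of_nat (Suc M) - t * v))"
    by (simp only: g)
  also have "\<dots> = gX v t (Suc M) (Suc M)"
    unfolding gX_def gdel_def gal_def c using K2_alg[OF d2 d3, of "gE v t M * gC v M M"]
    by (simp add: ac_simps)
  finally show ?thesis by simp
qed

end

lemma geom_pair:
  fixes x y :: "'a::comm_ring_1"
  shows "(y - x) * (\<Sum>a = 1..j. x ^ a * y ^ (Suc j - a)) = x * y * (y ^ j - x ^ j)"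
proof (induction j)
  case 0 then show ?case by simp
next
  case (Suc j)
  have "(\<Sum>a = 1..Suc j. x ^ a * y ^ (Suc (Suc j) - a)) = y * (\<Sum>a = 1..j. x ^ a * y ^ (Suc j - a)) + x ^ Suc j * y"
    by (simp add: sum.cl_ivl_Suc sum_distrib_left Suc_diff_le algebra_simps)
  then have "(y - x) * (\<Sum>a = 1..Suc j. x ^ a * y ^ (Suc (Suc j) - a))
      = y * ((y - x) * (\<Sum>a = 1..j. x ^ a * y ^ (Suc j - a))) + (y - x) * x ^ Suc j * y"
    by (simp add: algebra_simps)
  also have "\<dots> = y * (x * y * (y ^ j - x ^ j)) + (y - x) * x ^ Suc j * y"
    by (simp only: Suc.IH)
  also have "\<dots> = x * y * (y ^ Suc j - x ^ Suc j)"
    by (simp add: algebra_simps)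
  finally show ?case .
qed

lemma geom_pair':
  fixes x y :: "'a::field"
  assumes "y \<noteq> x" "x \<noteq> 0" "y \<noteq> 0"
  shows "(\<Sum>a = 1..j. x ^ a * y ^ (Suc j - a)) = (y ^ j - x ^ j) / (inverse x - inverse y)"
proof -
  have h: "(y - x) * (\<Sum>a = 1..j. x ^ a * y ^ (Suc j - a)) = x * y * (y ^ j - x ^ j)" by (rule geom_pair)
  have d: "inverse x - inverse y = (y - x) / (x * y)" using assms by (simp add: field_simps)
  have yx: "y - x \<noteq> 0" using assms by simp
  show ?thesis unfolding d using h yx assms by (simp add: field_simps)
qed

context gctx begin

lemma gL_rec:
  "gL v t (Suc M) (Suc j) = gL v t M (Suc j) + gdel v t (Suc M) / of_nat (Suc M) ^ Suc j
     - gal v (Suc M) * (\<Sum>k1 = 1..j. gL v t M (Suc j - k1) / of_nat (Suc M) ^ k1)"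
proof -
  define N :: 'a where "N = of_nat (Suc M)"
  have N0: "N \<noteq> 0" unfolding N_def of_nat_eq_0_iff by simp
  have nN: "N - of_nat n \<noteq> 0 \<and> (of_nat n :: 'a) \<noteq> 0" if n: "n \<in> {1..M}" for n
  proof
    show "N - of_nat n \<noteq> 0" unfolding N_def right_minus_eq of_nat_eq_iff using n by simp
    show "(of_nat n :: 'a) \<noteq> 0" unfolding of_nat_eq_0_iff using n by simp
  qed
  have S: "(\<Sum>k1 = 1..j. gL v t M (Suc j - k1) / N ^ k1)
      = (\<Sum>n = 1..M. gX v t M n * ((1 / of_nat n ^ j - 1 / N ^ j) / (N - of_nat n)))"
  proof -
    have "(\<Sum>k1 = 1..j. gL v t M (Suc j - k1) / N ^ k1)
        = (\<Sum>k1 = 1..j. \<Sum>n = 1..M. gX v t M n * ((1 / N) ^ k1 * (1 / of_nat n) ^ (Suc j - k1)))"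
      unfolding gL_def sum_divide_distrib
      by (intro sum.cong refl) (simp add: power_one_over field_simps)
    also have "\<dots> = (\<Sum>n = 1..M. gX v t M n * (\<Sum>k1 = 1..j. (1 / N) ^ k1 * (1 / of_nat n) ^ (Suc j - k1)))"
      by (subst sum.swap) (simp add: sum_distrib_left)
    also have "\<dots> = (\<Sum>n = 1..M. gX v t M n * ((1 / of_nat n ^ j - 1 / N ^ j) / (N - of_nat n)))"
    proof (intro sum.cong refl)
      fix n assume n: "n \<in> {1..M}"
      have "(\<Sum>k1 = 1..j. (1 / N) ^ k1 * (1 / of_nat n) ^ (Suc j - k1))
          = ((1 / of_nat n) ^ j - (1 / N) ^ j) / (inverse (1 / N) - inverse (1 / of_nat n))"
        by (rule geom_pair') (use nN[OF n] N0 in auto)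
      also have "\<dots> = (1 / of_nat n ^ j - 1 / N ^ j) / (N - of_nat n)"
        by (simp add: power_one_over)
      finally show "gX v t M n * (\<Sum>k1 = 1..j. (1 / N) ^ k1 * (1 / of_nat n) ^ (Suc j - k1))
          = gX v t M n * ((1 / of_nat n ^ j - 1 / N ^ j) / (N - of_nat n))" by simp
    qed
    finally show ?thesis .
  qed
  have "gL v t (Suc M) (Suc j) = (\<Sum>n = 1..M. gX v t (Suc M) n / of_nat n ^ Suc j)
        + gX v t (Suc M) (Suc M) / N ^ Suc j"
    unfolding gL_def N_def by (simp add: sum.cl_ivl_Suc)
  also have "\<dots> = (\<Sum>n = 1..M. gX v t M n * (1 - gal v (Suc M) * of_nat n / (N - of_nat n)) / of_nat n ^ Suc j)
        + (gdel v t (Suc M) + gal v (Suc M) * N * (\<Sum>n = 1..M. gX v t M n / (N - of_nat n))) / N ^ Suc j"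
    unfolding N_def K2 by (intro arg_cong2[where f = "(+)"] sum.cong refl) (auto simp: K1)
  also have "\<dots> = (\<Sum>n = 1..M. gX v t M n / of_nat n ^ Suc j - gal v (Suc M) * (gX v t M n * (1 / of_nat n ^ j) / (N - of_nat n)))
        + gdel v t (Suc M) / N ^ Suc j + gal v (Suc M) * (\<Sum>n = 1..M. gX v t M n * (1 / N ^ j) / (N - of_nat n))"
  proof -
    have a: "(\<Sum>n = 1..M. gX v t M n * (1 - gal v (Suc M) * of_nat n / (N - of_nat n)) / of_nat n ^ Suc j)
        = (\<Sum>n = 1..M. gX v t M n / of_nat n ^ Suc j - gal v (Suc M) * (gX v t M n * (1 / of_nat n ^ j) / (N - of_nat n)))"
    proof (intro sum.cong refl)
      fix n assume n: "n \<in> {1..M}"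
      show "gX v t M n * (1 - gal v (Suc M) * of_nat n / (N - of_nat n)) / of_nat n ^ Suc j
          = gX v t M n / of_nat n ^ Suc j - gal v (Suc M) * (gX v t M n * (1 / of_nat n ^ j) / (N - of_nat n))"
        using nN[OF n] by (simp add: field_simps)
    qed
    have b: "(gdel v t (Suc M) + gal v (Suc M) * N * (\<Sum>n = 1..M. gX v t M n / (N - of_nat n))) / N ^ Suc j
        = gdel v t (Suc M) / N ^ Suc j + gal v (Suc M) * (\<Sum>n = 1..M. gX v t M n * (1 / N ^ j) / (N - of_nat n))"
    proof -
      have s1: "(\<Sum>n = 1..M. gX v t M n * (1 / N ^ j) / (N - of_nat n)) = (\<Sum>n = 1..M. gX v t M n / (N - of_nat n)) / N ^ j"
        unfolding sum_divide_distrib by (rule sum.cong) auto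
      show ?thesis unfolding s1 using N0 by (simp add: field_simps)
    qed
    show ?thesis unfolding a b by simp
  qed
  also have "\<dots> = gL v t M (Suc j) + gdel v t (Suc M) / N ^ Suc j
     - gal v (Suc M) * (\<Sum>n = 1..M. gX v t M n * ((1 / of_nat n ^ j - 1 / N ^ j) / (N - of_nat n)))"
    unfolding gL_def
    by (simp add: sum_subtractf sum_distrib_left diff_divide_distrib right_diff_distrib algebra_simps)
  finally have X: "gL v t (Suc M) (Suc j) = gL v t M (Suc j) + gdel v t (Suc M) / N ^ Suc j
     - gal v (Suc M) * (\<Sum>n = 1..M. gX v t M n * ((1 / of_nat n ^ j - 1 / N ^ j) / (N - of_nat n)))" .
  show ?thesis unfolding N_def[symmetric] S using X .
qed

end

lemma lin_to_fps: "(of_nat m :: real fls) - fls_const c * fls_X = fps_to_fls (of_nat m - fps_const c * fps_X)"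
  by (simp add: fls_times_fps_to_fls fps_to_fls_of_nat)

lemma lin_nz: "1 \<le> m \<Longrightarrow> (of_nat m :: real fls) - fls_const c * fls_X \<noteq> 0"
proof -
  assume m: "1 \<le> m"
  define F :: "real fps" where "F = of_nat m - fps_const c * fps_X"
  have "F $ 0 = of_nat m" unfolding F_def by (simp add: fps_of_nat)
  then have ne: "F $ 0 \<noteq> 0" using m by simp
  have "F \<noteq> 0"
  proof
    assume "F = 0"
    with ne show False by simp
  qed
  then show ?thesis unfolding lin_to_fps F_def[symmetric] by simp
qed

interpretation G: gctx "fls_X :: real fls" "fls_const \<tau>" for \<tau>
proof
  fix m :: nat assume "1 \<le> m"
  then show "of_nat m - fls_const \<tau> * fls_X \<noteq> (0 :: real fls)" by (rule lin_nz)
next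
  fix j :: nat assume "1 \<le> j"
  then have "of_nat j - fls_const 1 * fls_X \<noteq> (0 :: real fls)" by (rule lin_nz)
  then show "of_nat j - fls_X \<noteq> (0 :: real fls)" by simp
qed

definition Ereal :: "real \<Rightarrow> nat \<Rightarrow> nat \<Rightarrow> real" where
  "Ereal \<tau> n r = zt \<tau> n (replicate r 1)"

lemma Ereal_0 [simp]: "Ereal \<tau> n 0 = 1" by (simp add: Ereal_def)

lemma zN_zero: "ks \<noteq> [] \<Longrightarrow> zN 0 ks = 0"
  by (cases ks) auto

lemma zt_zero: "ks \<noteq> [] \<Longrightarrow> zt \<tau> 0 ks = 0"
proof -
  assume ks: "ks \<noteq> []"
  have "zt \<tau> 0 ks = (\<Sum>x \<leftarrow> merges ks. 0)"
    unfolding zt_def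
  proof (rule arg_cong[where f = sum_list], rule map_cong[OF refl])
    fix x assume "x \<in> set (merges ks)"
    moreover obtain p c where "x = (p, c)" by (cases x)
    ultimately have "x = (p, c)" "(p, c) \<in> set (merges ks)" by auto
    then show "(case x of (p, c) \<Rightarrow> \<tau> ^ c * zN 0 p) = 0"
      using merges_nonempty[of p c ks] ks zN_zero by auto
  qed
  then show ?thesis by simp
qed

lemma Ereal_zero: "Ereal \<tau> 0 (Suc r) = 0"
  unfolding Ereal_def by (rule zt_zero) simp

lemma Ereal_rec:
  "Ereal \<tau> (Suc n) (Suc r) = Ereal \<tau> n (Suc r) + ((1 - \<tau>) * Ereal \<tau> n r + \<tau> * Ereal \<tau> (Suc n) r) / real (Suc n)"
  unfolding Ereal_def by (simp add: zt_cons)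

lemma Ereal_rec':
  "Ereal \<tau> n (Suc r) = (\<Sum>m = 1..n. ((1 - \<tau>) * Ereal \<tau> (m - 1) r + \<tau> * Ereal \<tau> m r) / real m)"
  unfolding Ereal_def by (simp add: zt_cons)

definition Efps :: "real \<Rightarrow> nat \<Rightarrow> real fps" where
  "Efps \<tau> n = Abs_fps (Ereal \<tau> n)"

lemma Efps_0: "Efps \<tau> 0 = 1"
proof (rule fps_ext)
  fix n show "Efps \<tau> 0 $ n = 1 $ n"
    by (cases n) (auto simp: Efps_def Ereal_zero)
qed

lemma Efps_step:
  "Efps \<tau> (Suc n) * (of_nat (Suc n) - fps_const \<tau> * fps_X) = Efps \<tau> n * (of_nat (Suc n) + fps_const (1 - \<tau>) * fps_X)"
proof -
  have l: "Efps \<tau> (Suc n) * (of_nat (Suc n) - fps_const \<tau> * fps_X)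
      = fps_const (real (Suc n)) * Efps \<tau> (Suc n) - fps_const \<tau> * (fps_X * Efps \<tau> (Suc n))"
    by (simp only: fps_of_nat algebra_simps)
  have r: "Efps \<tau> n * (of_nat (Suc n) + fps_const (1 - \<tau>) * fps_X)
      = fps_const (real (Suc n)) * Efps \<tau> n + fps_const (1 - \<tau>) * (fps_X * Efps \<tau> n)"
    by (simp only: fps_of_nat algebra_simps)
  show ?thesis unfolding l r
  proof (rule fps_ext)
    fix r
    show "(fps_const (real (Suc n)) * Efps \<tau> (Suc n) - fps_const \<tau> * (fps_X * Efps \<tau> (Suc n))) $ r
        = (fps_const (real (Suc n)) * Efps \<tau> n + fps_const (1 - \<tau>) * (fps_X * Efps \<tau> n)) $ r"
    proof (cases r)
      case 0 then show ?thesis by (simp add: Efps_def)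
    next
      case (Suc r')
      have "Ereal \<tau> (Suc n) (Suc r') * real (Suc n) - \<tau> * Ereal \<tau> (Suc n) r'
          = Ereal \<tau> n (Suc r') * real (Suc n) + (1 - \<tau>) * Ereal \<tau> n r'"
        unfolding Ereal_rec by (simp add: field_simps)
      then show ?thesis by (simp add: Suc Efps_def mult.commute)
    qed
  qed
qed

lemma field_solve: "(a::'a::field) * d = b * e \<Longrightarrow> d \<noteq> 0 \<Longrightarrow> a = b * (e / d)"
  by (simp add: field_simps)

lemma fls_const_1m: "fls_const (1 - \<tau>) = (1 - fls_const \<tau> :: real fls)"
  using fls_minus_const[of 1 \<tau>] by simp

lemma Efps_gE: "fps_to_fls (Efps \<tau> n) = gE fls_X (fls_const \<tau>) n"
proof (induction n)
  case 0 then show ?case by (simp add: Efps_0)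
next
  case (Suc n)
  have h: "fps_to_fls (Efps \<tau> (Suc n)) * (of_nat (Suc n) - fls_const \<tau> * fls_X)
      = fps_to_fls (Efps \<tau> n) * (of_nat (Suc n) + fls_const (1 - \<tau>) * fls_X)"
    using arg_cong[OF Efps_step[of \<tau> n], of fps_to_fls]
    by (simp only: fls_times_fps_to_fls fps_to_fls_minus fps_to_fls_plus fps_to_fls_of_nat fps_const_to_fls fps_X_to_fls)
  have nz: "(of_nat (Suc n) :: real fls) - fls_const \<tau> * fls_X \<noteq> 0" by (rule lin_nz) simp
  have "fps_to_fls (Efps \<tau> (Suc n)) = fps_to_fls (Efps \<tau> n) * ((of_nat (Suc n) + fls_const (1 - \<tau>) * fls_X) / (of_nat (Suc n) - fls_const \<tau> * fls_X))"
    by (rule field_solve[OF h nz])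
  also have "\<dots> = gE fls_X (fls_const \<tau>) (Suc n)"
    unfolding gE_Suc Suc fls_const_1m by (rule refl)
  finally show ?case .
qed

lemma fps_to_fls_sum: "fps_to_fls (sum f A) = (\<Sum>x\<in>A. fps_to_fls (f x))"
  by (induction A rule: infinite_finite_induct) auto

lemma fls_const_inv_nat: "fls_const (1 / real n) = (1 / of_nat n :: real fls)"
  using fls_const_divide_const[of 1 "real n"] by (simp add: fls_of_nat)

lemma fls_const_inv_nat_pow: "fls_const (1 / real n ^ k) = (1 / of_nat n ^ k :: real fls)"
  using fls_const_divide_const[of 1 "real n ^ k"] by (simp add: fls_of_nat fls_const_power)

definition Yc :: "real \<Rightarrow> nat \<Rightarrow> nat \<Rightarrow> real" where
  "Yc \<tau> n l = (if l = 0 then 0 else ((1 - \<tau>) * Ereal \<tau> (n - 1) (l - 1) + \<tau> * Ereal \<tau> n (l - 1)) / real n)"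

definition Yfps :: "real \<Rightarrow> nat \<Rightarrow> real fps" where
  "Yfps \<tau> n = Abs_fps (Yc \<tau> n)"

lemma Yfps_eq: "Yfps \<tau> n = fps_const (1 / real n) * (fps_X * (fps_const (1 - \<tau>) * Efps \<tau> (n - 1) + fps_const \<tau> * Efps \<tau> n))"
proof (rule fps_ext)
  fix l show "Yfps \<tau> n $ l = (fps_const (1 / real n) * (fps_X * (fps_const (1 - \<tau>) * Efps \<tau> (n - 1) + fps_const \<tau> * Efps \<tau> n))) $ l"
    by (simp add: Yfps_def Yc_def Efps_def)
qed

lemma Y_alg:
  fixes P v t E :: "'a::field"
  assumes "P \<noteq> 0" "P - t * v \<noteq> 0"
  shows "1 / P * (v * ((1 - t) * E + t * (E * ((P + (1 - t) * v) / (P - t * v))))) = v / (P - t * v) * E"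
  using assms by (simp add: divide_simps) (simp add: algebra_simps)

lemma Yfps_fls:
  assumes "1 \<le> n"
  shows "fps_to_fls (Yfps \<tau> n) = fls_X / (of_nat n - fls_const \<tau> * fls_X) * gE fls_X (fls_const \<tau>) (n - 1)"
proof -
  obtain m where n: "n = Suc m" using assms by (cases n) auto
  have "fps_to_fls (Yfps \<tau> n) = 1 / of_nat (Suc m) * (fls_X * ((1 - fls_const \<tau>) * gE fls_X (fls_const \<tau>) m
      + fls_const \<tau> * gE fls_X (fls_const \<tau>) (Suc m)))"
    unfolding Yfps_eq n
    by (simp only: fls_times_fps_to_fls fps_to_fls_plus fps_const_to_fls fps_X_to_fls Efps_gE fls_const_inv_nat
        fls_const_1m diff_Suc_1)
  also have "\<dots> = fls_X / (of_nat (Suc m) - fls_const \<tau> * fls_X) * gE fls_X (fls_const \<tau>) m"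
    unfolding gE_Suc
  proof (rule Y_alg)
    show "(of_nat (Suc m) :: real fls) \<noteq> 0" unfolding of_nat_eq_0_iff by simp
    show "(of_nat (Suc m) :: real fls) - fls_const \<tau> * fls_X \<noteq> 0" by (rule lin_nz) simp
  qed
  finally show ?thesis unfolding n by simp
qed

definition geo :: "real \<Rightarrow> real fps" where
  "geo c = Abs_fps (\<lambda>i. c ^ i)"

lemma geo_mult: "geo c * (1 - fps_const c * fps_X) = 1"
proof -
  have e: "geo c * (1 - fps_const c * fps_X) = geo c - fps_const c * (fps_X * geo c)"
    by (simp only: algebra_simps mult_1_left mult_1_right)
  show ?thesis unfolding e
  proof (rule fps_ext)
    fix r show "(geo c - fps_const c * (fps_X * geo c)) $ r = 1 $ r"
      by (cases r) (auto simp: geo_def)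
  qed
qed

lemma geo_fls: "fps_to_fls (geo c) = 1 / (1 - fls_const c * fls_X)"
proof -
  have h: "fps_to_fls (geo c) * (1 - fls_const c * fls_X) = 1"
    using arg_cong[OF geo_mult[of c], of fps_to_fls]
    by (simp only: fls_times_fps_to_fls fps_to_fls_minus fps_const_to_fls fps_X_to_fls fps_one_to_fls)
  then have "1 - fls_const c * fls_X \<noteq> (0 :: real fls)" by auto
  with h show ?thesis by (simp add: field_simps)
qed

definition Cfps :: "nat \<Rightarrow> nat \<Rightarrow> real fps" where
  "Cfps N n = (\<Prod>i<n. geo (1 / real (N - i)))"

lemma C_alg:
  fixes A v :: "'a::field"
  assumes "A \<noteq> 0" "A - v \<noteq> 0"
  shows "1 / (1 - 1 / A * v) = A / (A - v)"
  using assms by (simp add: divide_simps)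

lemma Cfps_fls: "n \<le> N \<Longrightarrow> fps_to_fls (Cfps N n) = gC fls_X N n"
proof (induction n)
  case 0 then show ?case by (simp add: Cfps_def)
next
  case (Suc n)
  have A: "(of_nat (N - n) :: real fls) \<noteq> 0" unfolding of_nat_eq_0_iff using Suc.prems by simp
  have Av: "(of_nat (N - n) :: real fls) - fls_X \<noteq> 0" using G.nz2[of "N - n"] Suc.prems by simp
  have "fps_to_fls (Cfps N (Suc n)) = fps_to_fls (Cfps N n) * fps_to_fls (geo (1 / real (N - n)))"
    by (simp add: Cfps_def fls_times_fps_to_fls)
  also have "\<dots> = gC fls_X N n * (of_nat (N - n) / (of_nat (N - n) - fls_X))"
    unfolding geo_fls fls_const_inv_nat Suc.IH[OF Suc_leD[OF Suc.prems]]
    by (simp only: C_alg[OF A Av])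
  also have "\<dots> = gC fls_X N (Suc n)" by (simp add: gC_Suc)
  finally show ?case .
qed

lemma gX_fps:
  assumes "1 \<le> n" "n \<le> N"
  shows "gX fls_X (fls_const \<tau>) N n = fps_to_fls (Yfps \<tau> n * Cfps N n)"
  unfolding gX_def fls_times_fps_to_fls Yfps_fls[OF assms(1)] Cfps_fls[OF assms(2)] by simp

lemma gL_fps:
  "gL fls_X (fls_const \<tau>) N k = fps_to_fls (\<Sum>n = 1..N. fps_const (1 / real n ^ k) * (Yfps \<tau> n * Cfps N n))"
  unfolding gL_def fps_to_fls_sum
proof (rule sum.cong[OF refl])
  fix n assume n: "n \<in> {1..N}"
  have "fps_to_fls (fps_const (1 / real n ^ k) * (Yfps \<tau> n * Cfps N n))
      = fls_const (1 / real n ^ k) * gX fls_X (fls_const \<tau>) N n"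
    using n by (simp add: gX_fps fls_times_fps_to_fls)
  also have "fls_const (1 / real n ^ k) = (1 / of_nat n ^ k :: real fls)"
    by (rule fls_const_inv_nat_pow)
  finally show "gX fls_X (fls_const \<tau>) N n / of_nat n ^ k = fps_to_fls (fps_const (1 / real n ^ k) * (Yfps \<tau> n * Cfps N n))"
    by simp
qed

definition gm :: "real \<Rightarrow> nat \<Rightarrow> real" where
  "gm \<tau> l = (\<Sum>i<l. \<tau> ^ i)"

definition W :: "real \<Rightarrow> nat \<Rightarrow> nat \<Rightarrow> nat \<Rightarrow> nat \<Rightarrow> real" where
  "W \<tau> N j k l = (\<Sum>ks\<in>comps j k. \<Sum>ls\<in>comps j l. gm \<tau> (last ls) * zN N (map2 (+) ks ls))"

definition Rr :: "real \<Rightarrow> nat \<Rightarrow> nat \<Rightarrow> nat \<Rightarrow> real" where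
  "Rr \<tau> N k l = (\<Sum>j = 1..k. (-1) ^ (j - 1) * W \<tau> N j k l)"

lemma gm_0 [simp]: "gm \<tau> 0 = 0" by (simp add: gm_def)

lemma comps_0: "comps 0 k = (if k = 0 then {[]} else {})"
  by (auto simp: comps_def)

lemma comps_Suc: "comps (Suc j) k = (\<lambda>(a, ks). a # ks) ` (SIGMA a:{1..k}. comps j (k - a))"
proof (rule set_eqI)
  fix xs
  show "xs \<in> comps (Suc j) k \<longleftrightarrow> xs \<in> (\<lambda>(a, ks). a # ks) ` (SIGMA a:{1..k}. comps j (k - a))"
  proof
    assume h: "xs \<in> comps (Suc j) k"
    then obtain a ks where xs: "xs = a # ks" unfolding comps_def by (cases xs) auto
    have "(a, ks) \<in> (SIGMA a:{1..k}. comps j (k - a))"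
      using h unfolding xs comps_def by auto
    then show "xs \<in> (\<lambda>(a, ks). a # ks) ` (SIGMA a:{1..k}. comps j (k - a))"
      unfolding xs by (rule rev_image_eqI) simp
  next
    assume "xs \<in> (\<lambda>(a, ks). a # ks) ` (SIGMA a:{1..k}. comps j (k - a))"
    then obtain a ks where xs: "xs = a # ks" and h: "a \<in> {1..k}" "ks \<in> comps j (k - a)" by auto
    then show "xs \<in> comps (Suc j) k" unfolding comps_def by auto
  qed
qed

lemma finite_comps: "finite (comps j k)"
proof -
  have "comps j k \<subseteq> {xs. set xs \<subseteq> {..k} \<and> length xs = j}"
  proof
    fix xs assume "xs \<in> comps j k"
    then have "sum_list xs = k" "length xs = j" by (auto simp: comps_def)
    moreover have "\<forall>x\<in>set xs. x \<le> sum_list xs" by (simp add: member_le_sum_list)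
    ultimately show "xs \<in> {xs. set xs \<subseteq> {..k} \<and> length xs = j}" by auto
  qed
  then show ?thesis using finite_lists_length_eq[of "{..k}" j] finite_subset by blast
qed

lemma comps_len_gt: "k < j \<Longrightarrow> comps j k = {}"
proof -
  assume kj: "k < j"
  { fix xs assume "xs \<in> comps j k"
    then have "length xs = j" "sum_list xs = k" "\<forall>i\<in>set xs. 1 \<le> i" by (auto simp: comps_def)
    then have "j \<le> k" using sum_list_mono[of xs "\<lambda>_. 1" "\<lambda>x. x"] by (auto simp: sum_list_triv)
    with kj have False by simp }
  then show ?thesis by auto
qed

lemma comps_1: "1 \<le> k \<Longrightarrow> comps 1 k = {[k]}"
  by (auto simp: comps_def length_Suc_conv)

lemma comps_nonempty: "xs \<in> comps j k \<Longrightarrow> 1 \<le> j \<Longrightarrow> xs \<noteq> []"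
  by (auto simp: comps_def)

lemma sum_comps_Suc:
  "(\<Sum>xs\<in>comps (Suc j) k. g xs) = (\<Sum>a = 1..k. \<Sum>ks\<in>comps j (k - a). g (a # ks))"
proof -
  have "(\<Sum>xs\<in>comps (Suc j) k. g xs) = (\<Sum>(a, ks)\<in>(SIGMA a:{1..k}. comps j (k - a)). g (a # ks))"
    unfolding comps_Suc by (subst sum.reindex[OF inj_Cons_pair]) (simp add: o_def case_prod_unfold)
  also have "\<dots> = (\<Sum>a = 1..k. \<Sum>ks\<in>comps j (k - a). g (a # ks))"
    by (subst sum.Sigma[symmetric]) (auto simp: finite_comps)
  finally show ?thesis .
qed

lemma Rr_ext: "k \<le> K \<Longrightarrow> Rr \<tau> N k l = (\<Sum>j = 1..K. (-1) ^ (j - 1) * W \<tau> N j k l)"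
  unfolding Rr_def
  by (rule sum.mono_neutral_left) (auto simp: W_def comps_len_gt)

lemma W_split:
  assumes "1 \<le> j"
  shows "W \<tau> (Suc M) j k l = W \<tau> M j k l +
    (\<Sum>ks\<in>comps j k. \<Sum>ls\<in>comps j l. gm \<tau> (last ls) * zN M (map2 (+) (tl ks) (tl ls)) / real (Suc M) ^ (hd ks + hd ls))"
  unfolding W_def sum.distrib[symmetric]
proof (intro sum.cong refl)
  fix ks ls assume ks: "ks \<in> comps j k" and ls: "ls \<in> comps j l"
  obtain a ks' where a: "ks = a # ks'" using comps_nonempty[OF ks assms] by (cases ks) auto
  obtain b ls' where b: "ls = b # ls'" using comps_nonempty[OF ls assms] by (cases ls) auto
  show "gm \<tau> (last ls) * zN (Suc M) (map2 (+) ks ls) =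
      gm \<tau> (last ls) * zN M (map2 (+) ks ls) + gm \<tau> (last ls) * zN M (map2 (+) (tl ks) (tl ls)) / real (Suc M) ^ (hd ks + hd ls)"
    unfolding a b by (simp only: list.map zip_Cons_Cons prod.case zN_Suc list.sel) (simp add: algebra_simps)
qed

lemma V_1:
  assumes "1 \<le> k"
  shows "(\<Sum>ks\<in>comps 1 k. \<Sum>ls\<in>comps 1 l. gm \<tau> (last ls) * zN M (map2 (+) (tl ks) (tl ls)) / real (Suc M) ^ (hd ks + hd ls))
    = gm \<tau> l / real (Suc M) ^ (k + l)"
proof (cases "l = 0")
  case True
  then show ?thesis by (simp add: comps_len_gt)
next
  case False
  then have l: "1 \<le> l" by simp
  show ?thesis unfolding comps_1[OF assms] comps_1[OF l] by simp
qed

lemma V_Suc: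
  assumes "1 \<le> j"
  shows "(\<Sum>ks\<in>comps (Suc j) k. \<Sum>ls\<in>comps (Suc j) l. gm \<tau> (last ls) * zN M (map2 (+) (tl ks) (tl ls)) / real (Suc M) ^ (hd ks + hd ls))
    = (\<Sum>a = 1..k. \<Sum>b = 1..l. W \<tau> M j (k - a) (l - b) / real (Suc M) ^ (a + b))"
proof -
  have "(\<Sum>ks\<in>comps (Suc j) k. \<Sum>ls\<in>comps (Suc j) l. gm \<tau> (last ls) * zN M (map2 (+) (tl ks) (tl ls)) / real (Suc M) ^ (hd ks + hd ls))
    = (\<Sum>a = 1..k. \<Sum>ks\<in>comps j (k - a). \<Sum>b = 1..l. \<Sum>ls\<in>comps j (l - b).
         gm \<tau> (last (b # ls)) * zN M (map2 (+) ks ls) / real (Suc M) ^ (a + b))"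
    by (simp only: sum_comps_Suc list.sel)
  also have "\<dots> = (\<Sum>a = 1..k. \<Sum>ks\<in>comps j (k - a). \<Sum>b = 1..l. \<Sum>ls\<in>comps j (l - b).
         gm \<tau> (last ls) * zN M (map2 (+) ks ls) / real (Suc M) ^ (a + b))"
  proof (intro sum.cong refl)
    fix ls b assume "ls \<in> comps j (l - b)"
    then have "ls \<noteq> []" using comps_nonempty assms by blast
    then show "gm \<tau> (last (b # ls)) * zN M (map2 (+) ks ls) / real (Suc M) ^ (a + b) =
        gm \<tau> (last ls) * zN M (map2 (+) ks ls) / real (Suc M) ^ (a + b)" for ks a by simp
  qed
  also have "\<dots> = (\<Sum>a = 1..k. \<Sum>b = 1..l. W \<tau> M j (k - a) (l - b) / real (Suc M) ^ (a + b))"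
    unfolding W_def sum_divide_distrib
    by (intro sum.cong refl) (subst sum.swap, rule refl)
  finally show ?thesis .
qed

lemma Rr_rec:
  assumes "1 \<le> k"
  shows "Rr \<tau> (Suc M) k l = Rr \<tau> M k l + gm \<tau> l / real (Suc M) ^ (k + l)
     - (\<Sum>a = 1..k. \<Sum>b = 1..l. Rr \<tau> M (k - a) (l - b) / real (Suc M) ^ (a + b))"
proof -
  define V where "V j = (\<Sum>ks\<in>comps j k. \<Sum>ls\<in>comps j l. gm \<tau> (last ls) * zN M (map2 (+) (tl ks) (tl ls)) / real (Suc M) ^ (hd ks + hd ls))" for j
  have "Rr \<tau> (Suc M) k l = Rr \<tau> M k l + (\<Sum>j = 1..k. (-1) ^ (j - 1) * V j)"
    unfolding Rr_def V_def sum.distrib[symmetric]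
    by (intro sum.cong refl) (simp add: W_split algebra_simps)
  also have "(\<Sum>j = 1..k. (-1) ^ (j - 1) * V j) = V 1 + (\<Sum>j = 1..k - 1. (-1) ^ j * V (Suc j))"
  proof -
    have "(\<Sum>j = 1..k. (-1) ^ (j - 1) * V j) = (-1) ^ (1 - 1) * V 1 + (\<Sum>j = Suc 1..k. (-1) ^ (j - 1) * V j)"
      using assms by (subst sum.atLeast_Suc_atMost) auto
    also have "(\<Sum>j = Suc 1..k. (-1) ^ (j - 1) * V j) = (\<Sum>j = 1..k - 1. (-1) ^ (Suc j - 1) * V (Suc j))"
      using assms by (subst sum.shift_bounds_cl_Suc_ivl[symmetric]) simp
    finally show ?thesis by simp
  qed
  also have "V 1 = gm \<tau> l / real (Suc M) ^ (k + l)"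
    unfolding V_def by (rule V_1[OF assms])
  also have "(\<Sum>j = 1..k - 1. (-1) ^ j * V (Suc j))
      = - (\<Sum>a = 1..k. \<Sum>b = 1..l. Rr \<tau> M (k - a) (l - b) / real (Suc M) ^ (a + b))"
  proof -
    have "(\<Sum>j = 1..k - 1. (-1) ^ j * V (Suc j))
        = (\<Sum>j = 1..k - 1. \<Sum>a = 1..k. \<Sum>b = 1..l. - ((-1) ^ (j - 1) * W \<tau> M j (k - a) (l - b) / real (Suc M) ^ (a + b)))"
    proof (intro sum.cong refl)
      fix j assume j: "j \<in> {1..k - 1}"
      then obtain j' where j': "j = Suc j'" by (cases j) auto
      show "(-1) ^ j * V (Suc j) = (\<Sum>a = 1..k. \<Sum>b = 1..l. - ((-1) ^ (j - 1) * W \<tau> M j (k - a) (l - b) / real (Suc M) ^ (a + b)))"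
        unfolding V_def V_Suc[of j, OF j[THEN atLeastAtMost_iff[THEN iffD1], THEN conjunct1]]
        by (simp add: sum_distrib_left j' sum_negf)
    qed
    also have "\<dots> = (\<Sum>a = 1..k. \<Sum>j = 1..k - 1. \<Sum>b = 1..l. - ((-1) ^ (j - 1) * W \<tau> M j (k - a) (l - b) / real (Suc M) ^ (a + b)))"
      by (rule sum.swap)
    also have "\<dots> = (\<Sum>a = 1..k. \<Sum>b = 1..l. \<Sum>j = 1..k - 1. - ((-1) ^ (j - 1) * W \<tau> M j (k - a) (l - b) / real (Suc M) ^ (a + b)))"
      by (rule sum.cong[OF refl]) (rule sum.swap)
    also have "\<dots> = (\<Sum>a = 1..k. \<Sum>b = 1..l. - ((\<Sum>j = 1..k - 1. (-1) ^ (j - 1) * W \<tau> M j (k - a) (l - b)) / real (Suc M) ^ (a + b)))"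
      by (simp add: sum_negf sum_divide_distrib)
    also have "\<dots> = (\<Sum>a = 1..k. \<Sum>b = 1..l. - (Rr \<tau> M (k - a) (l - b) / real (Suc M) ^ (a + b)))"
    proof (intro sum.cong refl)
      fix a b assume a: "a \<in> {1..k}"
      have "Rr \<tau> M (k - a) (l - b) = (\<Sum>j = 1..k - 1. (-1) ^ (j - 1) * W \<tau> M j (k - a) (l - b))"
        by (rule Rr_ext) (use a in auto)
      then show "- ((\<Sum>j = 1..k - 1. (-1) ^ (j - 1) * W \<tau> M j (k - a) (l - b)) / real (Suc M) ^ (a + b))
          = - (Rr \<tau> M (k - a) (l - b) / real (Suc M) ^ (a + b))" by simp
    qed
    also have "\<dots> = - (\<Sum>a = 1..k. \<Sum>b = 1..l. Rr \<tau> M (k - a) (l - b) / real (Suc M) ^ (a + b))"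
      by (simp add: sum_negf)
    finally show ?thesis .
  qed
  finally show ?thesis by simp
qed

definition Rfps :: "real \<Rightarrow> nat \<Rightarrow> nat \<Rightarrow> real fps" where
  "Rfps \<tau> N k = Abs_fps (Rr \<tau> N k)"

definition alfps :: "nat \<Rightarrow> real fps" where
  "alfps N = Abs_fps (\<lambda>l. if l = 0 then 0 else 1 / real N ^ l)"

definition delfps :: "real \<Rightarrow> nat \<Rightarrow> real fps" where
  "delfps \<tau> N = Abs_fps (\<lambda>l. gm \<tau> l / real N ^ l)"

lemma alfps_eq: "alfps N = fps_X * (fps_const (1 / real N) * geo (1 / real N))"
proof (rule fps_ext)
  fix l show "alfps N $ l = (fps_X * (fps_const (1 / real N) * geo (1 / real N))) $ l"
    by (cases l) (auto simp: alfps_def geo_def power_one_over)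
qed

lemma al_alg:
  fixes N v :: "'a::field"
  assumes "N \<noteq> 0" "N - v \<noteq> 0"
  shows "v * (1 / N * (1 / (1 - 1 / N * v))) = v / (N - v)"
  using assms by (simp add: divide_simps)

lemma alfps_fls: "1 \<le> N \<Longrightarrow> fps_to_fls (alfps N) = gal fls_X N"
proof -
  assume N: "1 \<le> N"
  have a: "(of_nat N :: real fls) \<noteq> 0" unfolding of_nat_eq_0_iff using N by simp
  have b: "(of_nat N :: real fls) - fls_X \<noteq> 0" using G.nz2[OF N] by simp
  show ?thesis unfolding alfps_eq gal_def
    by (simp only: fls_times_fps_to_fls fps_X_to_fls fps_const_to_fls geo_fls fls_const_inv_nat al_alg[OF a b])
qed

lemma delfps_eq: "delfps \<tau> N = alfps N * geo (\<tau> / real N)"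
proof (rule fps_ext)
  fix l
  have "(alfps N * geo (\<tau> / real N)) $ l = (\<Sum>i = 0..l. (if i = 0 then 0 else 1 / real N ^ i) * (\<tau> / real N) ^ (l - i))"
    by (simp add: fps_mult_nth alfps_def geo_def)
  also have "\<dots> = (\<Sum>i = 1..l. 1 / real N ^ i * (\<tau> / real N) ^ (l - i))"
    by (rule sum.mono_neutral_cong_right) auto
  also have "\<dots> = (\<Sum>i = 1..l. \<tau> ^ (l - i) / real N ^ l)"
  proof (rule sum.cong[OF refl])
    fix i assume "i \<in> {1..l}"
    then have "l = i + (l - i)" by simp
    then have "real N ^ l = real N ^ i * real N ^ (l - i)" by (metis power_add)
    then show "1 / real N ^ i * (\<tau> / real N) ^ (l - i) = \<tau> ^ (l - i) / real N ^ l"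
      by (simp add: power_divide)
  qed
  also have "\<dots> = (\<Sum>i<l. \<tau> ^ (l - Suc i)) / real N ^ l"
    by (simp add: sum_divide_distrib sum.atLeast1_atMost_eq)
  also have "\<dots> = gm \<tau> l / real N ^ l"
    unfolding gm_def by (subst sum.nat_diff_reindex) (rule refl)
  finally show "delfps \<tau> N $ l = (alfps N * geo (\<tau> / real N)) $ l"
    by (simp add: delfps_def)
qed

lemma del_alg:
  fixes N v t :: "'a::field"
  assumes "N \<noteq> 0" "N - v \<noteq> 0" "N - t * v \<noteq> 0"
  shows "v / (N - v) * (1 / (1 - t * (1 / N) * v)) = v * N / ((N - v) * (N - t * v))"
  using assms by (simp add: divide_simps)

lemma delfps_fls: "1 \<le> N \<Longrightarrow> fps_to_fls (delfps \<tau> N) = gdel fls_X (fls_const \<tau>) N"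
proof -
  assume N: "1 \<le> N"
  have a: "(of_nat N :: real fls) \<noteq> 0" unfolding of_nat_eq_0_iff using N by simp
  have b: "(of_nat N :: real fls) - fls_X \<noteq> 0" using G.nz2[OF N] by simp
  have c: "(of_nat N :: real fls) - fls_const \<tau> * fls_X \<noteq> 0" using G.nz1[OF N] by simp
  have e: "fls_const (\<tau> / real N) = fls_const \<tau> * (1 / of_nat N :: real fls)"
    by (simp add: fls_const_inv_nat[symmetric] fls_const_mult_const)
  show ?thesis unfolding delfps_eq gdel_def
    by (simp only: fls_times_fps_to_fls alfps_fls[OF N] gal_def geo_fls e del_alg[OF a b c])
qed

lemma Rr_zero_k: "Rr \<tau> N 0 l = 0"
  by (simp add: Rr_def)

lemma Rr_zero_N: "Rr \<tau> 0 k l = 0"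
proof -
  have "W \<tau> 0 j k l = 0" if j1: "1 \<le> j" for j
    unfolding W_def
  proof (intro sum.neutral ballI)
    fix ks ls assume ks: "ks \<in> comps j k" and ls: "ls \<in> comps j l"
    obtain a ks' where a: "ks = a # ks'" using comps_nonempty[OF ks j1] by (cases ks) auto
    obtain b ls' where b: "ls = b # ls'" using comps_nonempty[OF ls j1] by (cases ls) auto
    show "gm \<tau> (last ls) * zN 0 (map2 (+) ks ls) = 0" unfolding a b by simp
  qed
  then show ?thesis by (simp add: Rr_def)
qed

lemma Rfps_zero_k: "Rfps \<tau> M 0 = 0"
  by (rule fps_ext) (simp add: Rfps_def Rr_zero_k)

lemma Rfps_rec:
  assumes "1 \<le> k"
  shows "Rfps \<tau> (Suc M) k = Rfps \<tau> M k + fps_const (1 / real (Suc M) ^ k) * delfps \<tau> (Suc M)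
     - alfps (Suc M) * (\<Sum>a = 1..k. fps_const (1 / real (Suc M) ^ a) * Rfps \<tau> M (k - a))"
proof (rule fps_ext)
  fix l
  define N where "N = real (Suc M)"
  have inner: "(\<Sum>a = 1..k. fps_const (1 / real (Suc M) ^ a) * Rfps \<tau> M (k - a)) $ i
      = (\<Sum>a = 1..k. 1 / N ^ a * Rr \<tau> M (k - a) i)" for i
    by (simp add: fps_sum_nth Rfps_def N_def)
  have "(alfps (Suc M) * (\<Sum>a = 1..k. fps_const (1 / real (Suc M) ^ a) * Rfps \<tau> M (k - a))) $ l
      = (\<Sum>i = 0..l. alfps (Suc M) $ i * (\<Sum>a = 1..k. fps_const (1 / real (Suc M) ^ a) * Rfps \<tau> M (k - a)) $ (l - i))"
    by (rule fps_mult_nth)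
  also have "\<dots> = (\<Sum>i = 0..l. (if i = 0 then 0 else 1 / N ^ i) * (\<Sum>a = 1..k. 1 / N ^ a * Rr \<tau> M (k - a) (l - i)))"
    unfolding inner N_def by (simp add: alfps_def del: of_nat_Suc)
  also have "\<dots> = (\<Sum>i = 1..l. 1 / N ^ i * (\<Sum>a = 1..k. 1 / N ^ a * Rr \<tau> M (k - a) (l - i)))"
    by (rule sum.mono_neutral_cong_right) auto
  also have "\<dots> = (\<Sum>i = 1..l. \<Sum>a = 1..k. Rr \<tau> M (k - a) (l - i) / N ^ (a + i))"
    by (simp add: sum_distrib_left power_add field_simps)
  also have "\<dots> = (\<Sum>a = 1..k. \<Sum>b = 1..l. Rr \<tau> M (k - a) (l - b) / N ^ (a + b))"
    by (rule sum.swap)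
  finally have X: "(alfps (Suc M) * (\<Sum>a = 1..k. fps_const (1 / real (Suc M) ^ a) * Rfps \<tau> M (k - a))) $ l
      = (\<Sum>a = 1..k. \<Sum>b = 1..l. Rr \<tau> M (k - a) (l - b) / N ^ (a + b))" .
  have Y: "(fps_const (1 / real (Suc M) ^ k) * delfps \<tau> (Suc M)) $ l = gm \<tau> l / N ^ (k + l)"
    by (simp add: delfps_def N_def power_add)
  show "Rfps \<tau> (Suc M) k $ l = (Rfps \<tau> M k + fps_const (1 / real (Suc M) ^ k) * delfps \<tau> (Suc M)
     - alfps (Suc M) * (\<Sum>a = 1..k. fps_const (1 / real (Suc M) ^ a) * Rfps \<tau> M (k - a))) $ l"
    unfolding fps_sub_nth fps_add_nth X Y
    by (simp add: Rfps_def Rr_rec[OF assms] N_def)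
qed

lemma Rfps_fls_rec:
  "fps_to_fls (Rfps \<tau> (Suc M) (Suc j)) = fps_to_fls (Rfps \<tau> M (Suc j)) + gdel fls_X (fls_const \<tau>) (Suc M) / of_nat (Suc M) ^ Suc j
     - gal fls_X (Suc M) * (\<Sum>k1 = 1..j. fps_to_fls (Rfps \<tau> M (Suc j - k1)) / of_nat (Suc M) ^ k1)"
proof -
  have s: "(\<Sum>a = 1..Suc j. fps_const (1 / real (Suc M) ^ a) * Rfps \<tau> M (Suc j - a))
      = (\<Sum>a = 1..j. fps_const (1 / real (Suc M) ^ a) * Rfps \<tau> M (Suc j - a))"
    by (simp add: sum.cl_ivl_Suc Rfps_zero_k)
  have c: "fps_to_fls (fps_const (1 / real (Suc M) ^ a) * F) = fps_to_fls F / of_nat (Suc M) ^ a" for a F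
    using fls_const_inv_nat_pow[of "Suc M" a] by (simp add: fls_times_fps_to_fls)
  have one: "1 \<le> Suc j" by simp
  have R: "Rfps \<tau> (Suc M) (Suc j) = Rfps \<tau> M (Suc j) + fps_const (1 / real (Suc M) ^ Suc j) * delfps \<tau> (Suc M)
     - alfps (Suc M) * (\<Sum>a = 1..j. fps_const (1 / real (Suc M) ^ a) * Rfps \<tau> M (Suc j - a))"
    using Rfps_rec[OF one, of \<tau> M] unfolding s .
  have "fps_to_fls (Rfps \<tau> (Suc M) (Suc j)) = fps_to_fls (Rfps \<tau> M (Suc j)) + fps_to_fls (fps_const (1 / real (Suc M) ^ Suc j) * delfps \<tau> (Suc M))
     - fps_to_fls (alfps (Suc M)) * fps_to_fls (\<Sum>a = 1..j. fps_const (1 / real (Suc M) ^ a) * Rfps \<tau> M (Suc j - a))"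
    unfolding R fps_to_fls_minus fps_to_fls_plus by (rule arg_cong[OF fls_times_fps_to_fls])
  also have "\<dots> = fps_to_fls (Rfps \<tau> M (Suc j)) + gdel fls_X (fls_const \<tau>) (Suc M) / of_nat (Suc M) ^ Suc j
     - gal fls_X (Suc M) * (\<Sum>k1 = 1..j. fps_to_fls (Rfps \<tau> M (Suc j - k1)) / of_nat (Suc M) ^ k1)"
    unfolding c fps_to_fls_sum alfps_fls[OF Suc_le_mono[THEN iffD2, OF le0, unfolded One_nat_def[symmetric]]]
      delfps_fls[OF Suc_le_mono[THEN iffD2, OF le0, unfolded One_nat_def[symmetric]]] ..
  finally show ?thesis .
qed

lemma main_fls: "1 \<le> k \<Longrightarrow> gL fls_X (fls_const \<tau>) M k = fps_to_fls (Rfps \<tau> M k)"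
proof (induction M arbitrary: k)
  case 0
  have "Rfps \<tau> 0 k = 0" by (rule fps_ext) (simp add: Rfps_def Rr_zero_N)
  then show ?case by (simp add: gL_def)
next
  case (Suc M)
  obtain j where k: "k = Suc j" using Suc.prems by (cases k) auto
  have IH: "gL fls_X (fls_const \<tau>) M (Suc j - k1) = fps_to_fls (Rfps \<tau> M (Suc j - k1))"
    if k1: "k1 \<in> {1..j}" for k1
  proof -
    have "1 \<le> Suc j - k1" using k1 by auto
    then show ?thesis by (rule Suc.IH)
  qed
  have S: "(\<Sum>k1 = 1..j. gL fls_X (fls_const \<tau>) M (Suc j - k1) / of_nat (Suc M) ^ k1)
      = (\<Sum>k1 = 1..j. fps_to_fls (Rfps \<tau> M (Suc j - k1)) / of_nat (Suc M) ^ k1)"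
    by (rule sum.cong[OF refl]) (simp only: IH)
  show ?case unfolding k G.gL_rec Rfps_fls_rec Suc.IH[of "Suc j", simplified] S ..
qed

lemma coeff_identity:
  assumes "1 \<le> k"
  shows "(\<Sum>n = 1..N. (Yfps \<tau> n * Cfps N n) $ l / real n ^ k) = Rr \<tau> N k l"
proof -
  have "(\<Sum>n = 1..N. fps_const (1 / real n ^ k) * (Yfps \<tau> n * Cfps N n)) = Rfps \<tau> N k"
    using main_fls[OF assms, of \<tau> N] unfolding gL_fps by simp
  then have "(\<Sum>n = 1..N. fps_const (1 / real n ^ k) * (Yfps \<tau> n * Cfps N n)) $ l = Rr \<tau> N k l"
    by (simp add: Rfps_def)
  then show ?thesis by (simp add: fps_sum_nth)
qed

definition Hn :: "nat \<Rightarrow> real" where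
  "Hn N = (\<Sum>m = 1..N. 1 / real m)"

definition sig :: "nat \<Rightarrow> nat \<Rightarrow> real" where
  "sig N n = (\<Sum>i<n. 1 / real (N - i))"

lemma Hn_nonneg: "0 \<le> Hn N" by (simp add: Hn_def sum_nonneg)

lemma Hn_mono: "m \<le> n \<Longrightarrow> Hn m \<le> Hn n"
  unfolding Hn_def by (rule sum_mono2) auto

lemma zt_nonneg: "0 \<le> \<tau> \<Longrightarrow> 0 \<le> zt \<tau> N ks"
  unfolding zt_def by (rule sum_list_nonneg) (auto intro!: mult_nonneg_nonneg zN_nonneg)

lemma Ereal_nonneg: "0 \<le> \<tau> \<Longrightarrow> 0 \<le> Ereal \<tau> n r"
  unfolding Ereal_def by (rule zt_nonneg)

lemma Ereal_mono_Suc: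
  assumes "0 \<le> \<tau>" "\<tau> \<le> 1"
  shows "Ereal \<tau> n r \<le> Ereal \<tau> (Suc n) r"
proof (cases r)
  case (Suc r')
  have "0 \<le> ((1 - \<tau>) * Ereal \<tau> n r' + \<tau> * Ereal \<tau> (Suc n) r') / real (Suc n)"
    using assms Ereal_nonneg[OF assms(1)] by (intro divide_nonneg_nonneg add_nonneg_nonneg mult_nonneg_nonneg) auto
  then show ?thesis unfolding Suc Ereal_rec by simp
qed simp

lemma Ereal_mono:
  assumes "0 \<le> \<tau>" "\<tau> \<le> 1" "m \<le> n"
  shows "Ereal \<tau> m r \<le> Ereal \<tau> n r"
  using lift_Suc_mono_le[of "\<lambda>n. Ereal \<tau> n r", OF Ereal_mono_Suc[OF assms(1,2)] assms(3)] .

lemma Ereal_bound: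
  assumes "0 \<le> \<tau>" "\<tau> \<le> 1"
  shows "Ereal \<tau> n r \<le> Hn n ^ r"
proof (induction r arbitrary: n)
  case 0 then show ?case by simp
next
  case (Suc r)
  have "Ereal \<tau> n (Suc r) = (\<Sum>m = 1..n. ((1 - \<tau>) * Ereal \<tau> (m - 1) r + \<tau> * Ereal \<tau> m r) / real m)"
    by (rule Ereal_rec')
  also have "\<dots> \<le> (\<Sum>m = 1..n. Hn n ^ r / real m)"
  proof (rule sum_mono)
    fix m assume m: "m \<in> {1..n}"
    have a: "Ereal \<tau> (m - 1) r \<le> Hn n ^ r"
      using Suc.IH[of "m - 1"] Hn_mono[of "m - 1" n] m Hn_nonneg
      by (meson diff_le_self le_trans m atLeastAtMost_iff power_mono order_trans)
    have b: "Ereal \<tau> m r \<le> Hn n ^ r"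
      using Suc.IH[of m] Hn_mono[of m n] m Hn_nonneg by (meson atLeastAtMost_iff power_mono order_trans)
    have "(1 - \<tau>) * Ereal \<tau> (m - 1) r + \<tau> * Ereal \<tau> m r \<le> (1 - \<tau>) * Hn n ^ r + \<tau> * Hn n ^ r"
      using a b assms by (intro add_mono mult_left_mono) auto
    also have "\<dots> = Hn n ^ r" by (simp add: algebra_simps)
    finally show "((1 - \<tau>) * Ereal \<tau> (m - 1) r + \<tau> * Ereal \<tau> m r) / real m \<le> Hn n ^ r / real m"
      by (rule divide_right_mono) simp
  qed
  also have "\<dots> = Hn n ^ r * Hn n" unfolding Hn_def[of n] by (simp add: sum_distrib_left)
  also have "\<dots> = Hn n ^ Suc r" by simp
  finally show ?case .
qed

lemma Yc_nonneg: "0 \<le> \<tau> \<Longrightarrow> \<tau> \<le> 1 \<Longrightarrow> 0 \<le> Yc \<tau> n i"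
  unfolding Yc_def using Ereal_nonneg[of \<tau>]
  by (auto intro!: divide_nonneg_nonneg add_nonneg_nonneg mult_nonneg_nonneg)

lemma Yc_bound:
  assumes "0 \<le> \<tau>" "\<tau> \<le> 1" "1 \<le> n" "n \<le> N" "i \<le> l"
  shows "Yc \<tau> n i \<le> (1 + Hn N) ^ l / real n"
proof (cases "i = 0")
  case True then show ?thesis by (simp add: Yc_def Hn_nonneg)
next
  case False
  have h1: "Hn n ^ (i - 1) \<le> (1 + Hn N) ^ l"
  proof -
    have "Hn n ^ (i - 1) \<le> (1 + Hn N) ^ (i - 1)"
      using Hn_mono[OF assms(4)] Hn_nonneg[of n] by (intro power_mono) auto
    also have "\<dots> \<le> (1 + Hn N) ^ l"
      using Hn_nonneg[of N] assms(5) by (intro power_increasing) auto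
    finally show ?thesis .
  qed
  have a: "Ereal \<tau> (n - 1) (i - 1) \<le> (1 + Hn N) ^ l"
    using Ereal_mono[OF assms(1,2), of "n - 1" n "i - 1"] Ereal_bound[OF assms(1,2), of n "i - 1"] h1 by simp
  have b: "Ereal \<tau> n (i - 1) \<le> (1 + Hn N) ^ l"
    using Ereal_bound[OF assms(1,2), of n "i - 1"] h1 by simp
  have "(1 - \<tau>) * Ereal \<tau> (n - 1) (i - 1) + \<tau> * Ereal \<tau> n (i - 1) \<le> (1 - \<tau>) * (1 + Hn N) ^ l + \<tau> * (1 + Hn N) ^ l"
    using a b assms by (intro add_mono mult_left_mono) auto
  also have "\<dots> = (1 + Hn N) ^ l" by (simp add: algebra_simps)
  finally show ?thesis using False unfolding Yc_def by (simp add: divide_right_mono)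
qed

lemma geo_nth: "geo c $ i = c ^ i" by (simp add: geo_def)

lemma Cfps_Suc: "Cfps N (Suc n) = Cfps N n * geo (1 / real (N - n))"
  by (simp add: Cfps_def)

lemma Cfps_0th: "Cfps N n $ 0 = 1"
  by (induction n) (auto simp: Cfps_def geo_def)

lemma Cfps_nonneg: "0 \<le> Cfps N n $ r"
proof (induction n arbitrary: r)
  case 0 then show ?case by (simp add: Cfps_def)
next
  case (Suc n)
  show ?case unfolding Cfps_Suc fps_mult_nth geo_nth
    using Suc.IH by (auto intro!: sum_nonneg mult_nonneg_nonneg)
qed

lemma Cfps_bound: "Cfps N n $ r \<le> sig N n ^ r"
proof (induction n arbitrary: r)
  case 0 then show ?case by (simp add: Cfps_def sig_def)
next
  case (Suc n)
  define x where "x = 1 / real (N - n)"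
  have x0: "0 \<le> x" by (simp add: x_def)
  have s0: "0 \<le> sig N n" by (simp add: sig_def sum_nonneg)
  have "Cfps N (Suc n) $ r = (\<Sum>i = 0..r. Cfps N n $ i * x ^ (r - i))"
    unfolding Cfps_Suc fps_mult_nth geo_nth x_def ..
  also have "\<dots> \<le> (\<Sum>i = 0..r. of_nat (r choose i) * sig N n ^ i * x ^ (r - i))"
  proof (rule sum_mono)
    fix i assume i: "i \<in> {0..r}"
    have "0 < r choose i" using i by (simp add: zero_less_binomial)
    then have c1: "1 \<le> real (r choose i)" by linarith
    have "Cfps N n $ i * x ^ (r - i) \<le> sig N n ^ i * x ^ (r - i)"
      using Suc.IH[of i] x0 by (intro mult_right_mono) auto
    also have "\<dots> \<le> of_nat (r choose i) * (sig N n ^ i * x ^ (r - i))"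
      using mult_right_mono[OF c1, of "sig N n ^ i * x ^ (r - i)"] s0 x0 by simp
    finally show "Cfps N n $ i * x ^ (r - i) \<le> of_nat (r choose i) * sig N n ^ i * x ^ (r - i)" by (simp add: mult.assoc)
  qed
  also have "\<dots> = (sig N n + x) ^ r" by (simp add: binomial_ring atLeast0AtMost)
  also have "sig N n + x = sig N (Suc n)" by (simp add: sig_def x_def)
  finally show ?case .
qed

lemma sig_le: assumes "n \<le> N" shows "sig N n \<le> real n / real (N + 1 - n)"
proof -
  have "sig N n \<le> (\<Sum>i<n. 1 / real (N + 1 - n))"
    unfolding sig_def
  proof (rule sum_mono)
    fix i assume "i \<in> {..<n}"
    then have "N + 1 - n \<le> N - i" "1 \<le> N + 1 - n" using assms by auto
    then show "1 / real (N - i) \<le> 1 / real (N + 1 - n)"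
      by (intro divide_left_mono) auto
  qed
  then show ?thesis by simp
qed

lemma sig_le_H: assumes "n \<le> N" shows "sig N n \<le> Hn N"
proof -
  have inj: "inj_on (\<lambda>i. N - i) {..<n}" using assms by (auto simp: inj_on_def)
  have "sig N n = sum (\<lambda>m. 1 / real m) ((\<lambda>i. N - i) ` {..<n})"
    unfolding sig_def by (simp add: sum.reindex[OF inj])
  also have "\<dots> \<le> sum (\<lambda>m. 1 / real m) {1..N}"
    by (rule sum_mono2) (use assms in auto)
  finally show ?thesis unfolding Hn_def .
qed

lemma sig_nonneg: "0 \<le> sig N n" by (simp add: sig_def sum_nonneg)

lemma pf_alg: "(a::real) > 0 \<Longrightarrow> b > 0 \<Longrightarrow> 1 / (a * b) = (1 / a + 1 / b) / (a + b)"
  by (simp add: divide_simps)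

lemma recip_sum: "(\<Sum>n = 1..N. 1 / (real n * real (N + 1 - n))) = 2 * Hn N / real (N + 1)"
proof -
  have "(\<Sum>n = 1..N. 1 / (real n * real (N + 1 - n))) = (\<Sum>n = 1..N. (1 / real n + 1 / real (N + 1 - n)) / real (N + 1))"
  proof (rule sum.cong[OF refl])
    fix n assume n: "n \<in> {1..N}"
    then have e: "real (N + 1) = real n + real (N + 1 - n)" by (simp add: of_nat_diff)
    show "1 / (real n * real (N + 1 - n)) = (1 / real n + 1 / real (N + 1 - n)) / real (N + 1)"
      unfolding e by (rule pf_alg) (use n in auto)
  qed
  also have "\<dots> = (Hn N + (\<Sum>n = 1..N. 1 / real (N + 1 - n))) / real (N + 1)"
    unfolding Hn_def sum_divide_distrib[symmetric] sum.distrib ..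
  also have "(\<Sum>n = 1..N. 1 / real (N + 1 - n)) = Hn N"
    unfolding Hn_def by (subst sum.atLeastAtMost_rev) simp
  finally show ?thesis by simp
qed

definition Err :: "real \<Rightarrow> nat \<Rightarrow> nat \<Rightarrow> nat \<Rightarrow> real" where
  "Err \<tau> N k l = (\<Sum>n = 1..N. (\<Sum>i<l. Yc \<tau> n i * Cfps N n $ (l - i)) / real n ^ k)"

lemma YC_split: "(Yfps \<tau> n * Cfps N n) $ l = (\<Sum>i<l. Yc \<tau> n i * Cfps N n $ (l - i)) + Yc \<tau> n l"
  by (simp add: fps_mult_nth atLeast0AtMost lessThan_Suc_atMost[symmetric] Yfps_def Cfps_0th)

lemma main_term:
  assumes "1 \<le> l"
  shows "(\<Sum>n = 1..N. Yc \<tau> n l / real n ^ k) = zt \<tau> N (Suc k # replicate (l - 1) 1)"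
proof -
  obtain l' where l: "l = Suc l'" using assms by (cases l) auto
  show ?thesis unfolding zt_cons l
    by (intro sum.cong refl) (simp add: Yc_def Ereal_def field_simps)
qed

lemma finite_identity:
  assumes "1 \<le> k" "1 \<le> l"
  shows "zt \<tau> N (Suc k # replicate (l - 1) 1) + Err \<tau> N k l = Rr \<tau> N k l"
proof -
  have "Rr \<tau> N k l = (\<Sum>n = 1..N. (Yfps \<tau> n * Cfps N n) $ l / real n ^ k)"
    using coeff_identity[OF assms(1)] by simp
  also have "\<dots> = (\<Sum>n = 1..N. Yc \<tau> n l / real n ^ k) + Err \<tau> N k l"
    unfolding YC_split Err_def by (simp add: sum.distrib add_divide_distrib)
  finally show ?thesis using main_term[OF assms(2)] by simp
qed

lemma Err_bounds:
  assumes t: "0 \<le> \<tau>" "\<tau> \<le> 1" and k: "1 \<le> k"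
  shows "0 \<le> Err \<tau> N k l" "Err \<tau> N k l \<le> real l * ((1 + Hn N) ^ l) ^ 2 * (2 * Hn N / real (N + 1))"
proof -
  show "0 \<le> Err \<tau> N k l" unfolding Err_def
    by (intro sum_nonneg divide_nonneg_nonneg mult_nonneg_nonneg Yc_nonneg[OF t] Cfps_nonneg) auto
  define B where "B = (1 + Hn N) ^ l"
  have B0: "0 \<le> B" unfolding B_def using Hn_nonneg[of N] by simp
  have "Err \<tau> N k l \<le> (\<Sum>n = 1..N. real l * B ^ 2 * (1 / (real n * real (N + 1 - n))))"
    unfolding Err_def
  proof (rule sum_mono)
    fix n assume n: "n \<in> {1..N}"
    then have n1: "1 \<le> n" and nN: "n \<le> N" by auto
    have inner: "(\<Sum>i<l. Yc \<tau> n i * Cfps N n $ (l - i)) \<le> (\<Sum>i<l. B / real n * (sig N n * B))"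
    proof (rule sum_mono)
      fix i assume i: "i \<in> {..<l}"
      have y: "Yc \<tau> n i \<le> B / real n" unfolding B_def by (rule Yc_bound[OF t n1 nN]) (use i in auto)
      have "Cfps N n $ (l - i) \<le> sig N n ^ (l - i)" by (rule Cfps_bound)
      also have "\<dots> = sig N n * sig N n ^ (l - i - 1)" using i by (cases "l - i") auto
      also have "\<dots> \<le> sig N n * B"
      proof (rule mult_left_mono[OF _ sig_nonneg])
        have "sig N n ^ (l - i - 1) \<le> Hn N ^ (l - i - 1)"
          by (intro power_mono sig_le_H nN sig_nonneg)
        also have "\<dots> \<le> (1 + Hn N) ^ (l - i - 1)"
          using Hn_nonneg[of N] by (intro power_mono) auto
        also have "\<dots> \<le> B" unfolding B_def using Hn_nonneg[of N] by (intro power_increasing) auto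
        finally show "sig N n ^ (l - i - 1) \<le> B" .
      qed
      finally have c: "Cfps N n $ (l - i) \<le> sig N n * B" .
      show "Yc \<tau> n i * Cfps N n $ (l - i) \<le> B / real n * (sig N n * B)"
        by (rule mult_mono[OF y c]) (use B0 sig_nonneg Cfps_nonneg in auto)
    qed
    have inner0: "0 \<le> (\<Sum>i<l. Yc \<tau> n i * Cfps N n $ (l - i))"
      by (intro sum_nonneg mult_nonneg_nonneg Yc_nonneg[OF t] Cfps_nonneg)
    have nk: "real n \<le> real n ^ k" using n1 k by (metis One_nat_def of_nat_1 of_nat_le_iff power_increasing power_one_right of_nat_power)
    have "(\<Sum>i<l. Yc \<tau> n i * Cfps N n $ (l - i)) / real n ^ k \<le> (\<Sum>i<l. Yc \<tau> n i * Cfps N n $ (l - i)) / real n"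
      by (rule divide_left_mono[OF nk inner0]) (use n1 in auto)
    also have "\<dots> \<le> (\<Sum>i<l. B / real n * (sig N n * B)) / real n"
      by (rule divide_right_mono[OF inner]) simp
    also have "\<dots> = real l * B ^ 2 * (sig N n / real n ^ 2)"
      by (simp add: power2_eq_square field_simps)
    also have "\<dots> \<le> real l * B ^ 2 * (1 / (real n * real (N + 1 - n)))"
    proof (rule mult_left_mono)
      have "sig N n / real n ^ 2 \<le> (real n / real (N + 1 - n)) / real n ^ 2"
        by (rule divide_right_mono[OF sig_le[OF nN]]) simp
      also have "\<dots> = 1 / (real n * real (N + 1 - n))" using n1 by (simp add: power2_eq_square field_simps)
      finally show "sig N n / real n ^ 2 \<le> 1 / (real n * real (N + 1 - n))" .
    qed (use B0 in simp)
    finally show "(\<Sum>i<l. Yc \<tau> n i * Cfps N n $ (l - i)) / real n ^ k \<le> real l * B ^ 2 * (1 / (real n * real (N + 1 - n)))" .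
  qed
  also have "\<dots> = real l * B ^ 2 * (\<Sum>n = 1..N. 1 / (real n * real (N + 1 - n)))"
    by (rule sum_distrib_left[symmetric])
  also have "\<dots> = real l * B ^ 2 * (2 * Hn N / real (N + 1))"
    unfolding recip_sum ..
  finally show "Err \<tau> N k l \<le> real l * ((1 + Hn N) ^ l) ^ 2 * (2 * Hn N / real (N + 1))"
    unfolding B_def .
qed

lemma Hn_ln: "1 \<le> N \<Longrightarrow> Hn N \<le> 1 + ln (real N)"
proof -
  assume N: "1 \<le> N"
  have "harm N - ln (real N) \<le> harm 1 - ln (real 1)"
    by (rule euler_mascheroni_sequence_decreasing) (use N in auto)
  moreover have "Hn N = harm N" unfolding Hn_def harm_def by (simp add: divide_inverse)
  ultimately show ?thesis by (simp add: harm_def)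
qed

lemma Err_tendsto:
  assumes t: "0 \<le> \<tau>" "\<tau> \<le> 1" and k: "1 \<le> k"
  shows "(\<lambda>N. Err \<tau> N k l) \<longlonglongrightarrow> 0"
proof (rule tendsto_sandwich[where f = "\<lambda>_. 0" and h = "\<lambda>N. 2 * real l * ((2 + ln (real N)) ^ (2 * l + 1) / (real N + 1))"])
  show "\<forall>\<^sub>F N in sequentially. 0 \<le> Err \<tau> N k l" using Err_bounds(1)[OF t k] by simp
  show "\<forall>\<^sub>F N in sequentially. Err \<tau> N k l \<le> 2 * real l * ((2 + ln (real N)) ^ (2 * l + 1) / (real N + 1))"
  proof (rule eventually_sequentiallyI[of 1])
    fix N :: nat assume N: "1 \<le> N"
    have H: "Hn N \<le> 1 + ln (real N)" by (rule Hn_ln[OF N])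
    have L: "0 \<le> ln (real N)" using N by simp
    have H0: "0 \<le> Hn N" by (rule Hn_nonneg)
    have "((1 + Hn N) ^ l) ^ 2 * Hn N \<le> ((2 + ln (real N)) ^ l) ^ 2 * (2 + ln (real N))"
      using H H0 L by (intro mult_mono power_mono) auto
    also have "\<dots> = (2 + ln (real N)) ^ (2 * l + 1)"
      by (simp add: power_mult[symmetric] power_add mult.commute)
    finally have X: "((1 + Hn N) ^ l) ^ 2 * Hn N \<le> (2 + ln (real N)) ^ (2 * l + 1)" .
    have "Err \<tau> N k l \<le> real l * ((1 + Hn N) ^ l) ^ 2 * (2 * Hn N / real (N + 1))"
      by (rule Err_bounds(2)[OF t k])
    also have "\<dots> = 2 * real l * (((1 + Hn N) ^ l) ^ 2 * Hn N / (real N + 1))"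
      by (simp add: field_simps)
    also have "\<dots> \<le> 2 * real l * ((2 + ln (real N)) ^ (2 * l + 1) / (real N + 1))"
      by (intro mult_left_mono divide_right_mono X) auto
    finally show "Err \<tau> N k l \<le> 2 * real l * ((2 + ln (real N)) ^ (2 * l + 1) / (real N + 1))" .
  qed
  have "(\<lambda>N::nat. (2 + ln (real N)) ^ (2 * l + 1) / (real N + 1)) \<longlonglongrightarrow> 0"
    by real_asymp
  then show "(\<lambda>N. 2 * real l * ((2 + ln (real N)) ^ (2 * l + 1) / (real N + 1))) \<longlonglongrightarrow> 0"
    by (intro tendsto_mult_right_zero)
qed simp

definition ev :: "(letter list \<Rightarrow> real poly) \<Rightarrow> comb \<Rightarrow> real poly" where
  "ev g a = (\<Sum>(c, w) \<leftarrow> a. c * g w)"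

lemma ev_Nil [simp]: "ev g [] = 0" by (simp add: ev_def)
lemma ev_Cons [simp]: "ev g ((c, w) # a) = c * g w + ev g a" by (simp add: ev_def)
lemma ev_append [simp]: "ev g (a @ b) = ev g a + ev g b" by (simp add: ev_def)

lemma ev_map: "ev g (map (\<lambda>(c, v). (c * d, f v)) a) = d * ev (\<lambda>v. g (f v)) a"
  by (induction a) (auto simp: algebra_simps)

lemma ev_map1: "ev g (map (\<lambda>(c, v). (c, f v)) a) = ev (\<lambda>v. g (f v)) a"
  by (induction a) auto

lemma ev_cong: "(\<And>c w. (c, w) \<in> set a \<Longrightarrow> g w = h w) \<Longrightarrow> ev g a = ev h a"
proof (induction a)
  case Nil then show ?case by simp
next
  case (Cons x a)
  obtain c w where x: "x = (c, w)" by (cases x)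
  have "g w = h w" using Cons.prems[of c w] x by simp
  moreover have "ev g a = ev h a" using Cons.IH Cons.prems by auto
  ultimately show ?case unfolding x by simp
qed

lemma ev_sigma_X: "ev G (sigma_t (X # z)) = ev (\<lambda>v. G (X # v)) (sigma_t z)"
  by (simp only: sigma_t.simps ev_map1[where f = "\<lambda>v. X # v"])

lemma ev_sigma_Y: "ev G (sigma_t (Y # z)) = [:0, 1:] * ev (\<lambda>v. G (X # v)) (sigma_t z) + ev (\<lambda>v. G (Y # v)) (sigma_t z)"
  by (simp only: sigma_t.simps ev_append ev_map[where f = "\<lambda>v. X # v"] ev_map1[where f = "\<lambda>v. Y # v"])

lemma ev_sigma_rep: "ev G (sigma_t (replicate m X @ z)) = ev (\<lambda>v. G (replicate m X @ v)) (sigma_t z)"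
proof (induction m arbitrary: G)
  case 0 then show ?case by simp
next
  case (Suc m)
  have "ev G (sigma_t (replicate (Suc m) X @ z)) = ev (\<lambda>v. G (X # v)) (sigma_t (replicate m X @ z))"
    by (simp only: replicate_Suc append_Cons ev_sigma_X)
  also have "\<dots> = ev (\<lambda>v. G (X # replicate m X @ v)) (sigma_t z)" by (rule Suc.IH)
  finally show ?case by simp
qed

lemma ev_sigma_Nil: "ev G (sigma_t []) = G []" by simp

fun wd :: "nat list \<Rightarrow> letter list" where
  "wd [] = []"
| "wd (a # as) = replicate (a - 1) X @ Y # wd as"

lemma elt_words: "as \<noteq> [] \<Longrightarrow> (c, w) \<in> set (elt as) \<Longrightarrow> w \<noteq> [] \<and> last w = Y"
proof (induction as arbitrary: c w rule: elt.induct)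
  case 1 then show ?case by simp
next
  case (2 a) then show ?case by simp
next
  case (3 a b rest)
  from "3.prems"(2) obtain d w' e u where dw: "(d, w') \<in> set (elt (b # rest))" and w: "w = u @ w'"
    by (auto simp: cmul_def mty_def)
  have "w' \<noteq> [] \<and> last w' = Y" using "3.IH"[OF _ dw] by simp
  then show ?case using w by simp
qed

lemma cmul_elt: "elt (a # b # rest) =
   map (\<lambda>(d, w). (- [:0, 1:] * d, replicate (a - 1) X @ X # w)) (elt (b # rest)) @
   map (\<lambda>(d, w). (d, replicate (a - 1) X @ Y # w)) (elt (b # rest))"
  by (simp add: cmul_def mty_def)

lemma elt_main:
  "as \<noteq> [] \<Longrightarrow> ev (\<lambda>w. ev G (sigma_t (butlast w))) (elt as) = G (butlast (wd as))"
proof (induction as arbitrary: G rule: elt.induct)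
  case 1 then show ?case by simp
next
  case (2 a)
  show ?case by (simp add: butlast_append ev_sigma_rep[where z = "[]", simplified])
next
  case (3 a b rest)
  define u where "u = replicate (a - 1) X"
  define E where "E = elt (b # rest)"
  have ne: "\<And>d w. (d, w) \<in> set E \<Longrightarrow> w \<noteq> []" using elt_words[of "b # rest"] unfolding E_def by blast
  have "ev (\<lambda>w. ev G (sigma_t (butlast w))) (elt (a # b # rest))
      = - [:0, 1:] * ev (\<lambda>w. ev G (sigma_t (butlast (u @ X # w)))) E + ev (\<lambda>w. ev G (sigma_t (butlast (u @ Y # w)))) E"
    unfolding cmul_elt u_def[symmetric] E_def[symmetric]
    by (simp only: ev_append ev_map[where f = "\<lambda>w. u @ X # w"] ev_map1[where f = "\<lambda>w. u @ Y # w"] mult.commute)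
  also have "ev (\<lambda>w. ev G (sigma_t (butlast (u @ X # w)))) E = ev (\<lambda>w. ev (\<lambda>v. G (u @ X # v)) (sigma_t (butlast w))) E"
  proof (rule ev_cong)
    fix c w assume "(c, w) \<in> set E"
    then have "w \<noteq> []" using ne by blast
    then have b: "butlast (u @ X # w) = u @ X # butlast w" by (simp add: butlast_append)
    show "ev G (sigma_t (butlast (u @ X # w))) = ev (\<lambda>v. G (u @ X # v)) (sigma_t (butlast w))"
      unfolding b unfolding u_def by (simp only: ev_sigma_rep ev_sigma_X)
  qed
  also have "ev (\<lambda>w. ev G (sigma_t (butlast (u @ Y # w)))) E
      = [:0, 1:] * ev (\<lambda>w. ev (\<lambda>v. G (u @ X # v)) (sigma_t (butlast w))) E + ev (\<lambda>w. ev (\<lambda>v. G (u @ Y # v)) (sigma_t (butlast w))) E"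
  proof -
    have "ev (\<lambda>w. ev G (sigma_t (butlast (u @ Y # w)))) E
        = ev (\<lambda>w. [:0, 1:] * ev (\<lambda>v. G (u @ X # v)) (sigma_t (butlast w)) + ev (\<lambda>v. G (u @ Y # v)) (sigma_t (butlast w))) E"
    proof (rule ev_cong)
      fix c w assume "(c, w) \<in> set E"
      then have "w \<noteq> []" using ne by blast
      then have b: "butlast (u @ Y # w) = u @ Y # butlast w" by (simp add: butlast_append)
      show "ev G (sigma_t (butlast (u @ Y # w))) = [:0, 1:] * ev (\<lambda>v. G (u @ X # v)) (sigma_t (butlast w)) + ev (\<lambda>v. G (u @ Y # v)) (sigma_t (butlast w))"
        unfolding b unfolding u_def by (simp only: ev_sigma_rep ev_sigma_Y)
    qed
    also have "\<dots> = [:0, 1:] * ev (\<lambda>w. ev (\<lambda>v. G (u @ X # v)) (sigma_t (butlast w))) E + ev (\<lambda>w. ev (\<lambda>v. G (u @ Y # v)) (sigma_t (butlast w))) E"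
      unfolding ev_def by (induction E) (auto simp: algebra_simps)
    finally show ?thesis .
  qed
  also have "ev (\<lambda>w. ev (\<lambda>v. G (u @ Y # v)) (sigma_t (butlast w))) E = G (u @ Y # butlast (wd (b # rest)))"
    unfolding E_def by (rule "3.IH") simp
  finally show ?case by (simp add: u_def butlast_append)
qed

lemma word_idx_rep: "word_idx (replicate m X @ w) c = word_idx w (c + m)"
  by (induction m arbitrary: c) auto

lemma word_idx_wd: "\<forall>a\<in>set as. 1 \<le> a \<Longrightarrow> word_idx (wd as) 0 = as"
  by (induction as) (auto simp: word_idx_rep)

lemma wd_last: "as \<noteq> [] \<Longrightarrow> wd as \<noteq> [] \<and> last (wd as) = Y"
proof (induction as)
  case Nil then show ?case by simp
next
  case (Cons a as)
  show ?case
  proof (cases "as = []")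
    case True then show ?thesis by simp
  next
    case False
    then have "wd as \<noteq> []" "last (wd as) = Y" using Cons.IH by auto
    then show ?thesis by simp
  qed
qed

lemma Zt_elt:
  assumes "as \<noteq> []" "2 \<le> hd as" "\<forall>a\<in>set as. 1 \<le> a"
  shows "Zt_comb (elt as) = [:mzv as:]"
proof -
  have "Zt_comb (elt as) = ev (\<lambda>w. Z_comb (S_t w)) (elt as)"
    by (simp add: Zt_comb_def ev_def)
  also have "\<dots> = ev (\<lambda>w. ev (\<lambda>v. [:Z_word (v @ [Y]):]) (sigma_t (butlast w))) (elt as)"
  proof (rule ev_cong)
    fix c w assume "(c, w) \<in> set (elt as)"
    then have "w \<noteq> []" "last w = Y" using elt_words assms(1) by blast+
    then have St: "S_t w = map (\<lambda>(c, v). (c, v @ [Y])) (sigma_t (butlast w))"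
      by (simp add: S_t_def)
    have Zc: "Z_comb a = ev (\<lambda>w. [:Z_word w:]) a" for a by (simp add: Z_comb_def ev_def)
    show "Z_comb (S_t w) = ev (\<lambda>v. [:Z_word (v @ [Y]):]) (sigma_t (butlast w))"
      unfolding St Zc by (simp only: ev_map1[where f = "\<lambda>v. v @ [Y]"])
  qed
  also have "\<dots> = [:Z_word (butlast (wd as) @ [Y]):]" by (rule elt_main[OF assms(1)])
  also have "butlast (wd as) @ [Y] = wd as" using wd_last[OF assms(1)] by (metis append_butlast_last_id)
  also have "Z_word (wd as) = mzv as"
  proof -
    obtain a r where as: "as = a # r" using assms(1) by (cases as) auto
    have "hd (wd as) = X" using assms(2) unfolding as by (cases "a - 1") auto
    then show ?thesis using wd_last[OF assms(1)] word_idx_wd[OF assms(3)] by (simp add: Z_word_def)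
  qed
  finally show ?thesis .
qed

lemma comps_ge1: "xs \<in> comps j k \<Longrightarrow> \<forall>x\<in>set xs. 1 \<le> x"
  by (auto simp: comps_def)

lemma comps_len: "xs \<in> comps j k \<Longrightarrow> length xs = j"
  by (auto simp: comps_def)

lemma map2_ge2:
  assumes "\<forall>x\<in>set xs. 1 \<le> x" "\<forall>y\<in>set ys. 1 \<le> y"
  shows "\<forall>z\<in>set (map2 (+) xs ys). 2 \<le> (z::nat)"
proof
  fix z assume "z \<in> set (map2 (+) xs ys)"
  then obtain x y where xy: "(x, y) \<in> set (zip xs ys)" "z = x + y" by auto
  then have "x \<in> set xs" "y \<in> set ys" by (auto dest: set_zip_leftD set_zip_rightD)
  then have "1 \<le> x" "1 \<le> y" using assms by auto
  then show "2 \<le> z" using xy(2) by simp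
qed

lemma map2_shape:
  assumes "ks \<in> comps j k" "ls \<in> comps j l" "1 \<le> j"
  shows "\<exists>a r. map2 (+) ks ls = a # r \<and> 2 \<le> a \<and> (\<forall>x\<in>set r. 1 \<le> x)"
proof -
  obtain a ks' where a: "ks = a # ks'" using comps_nonempty[OF assms(1,3)] by (cases ks) auto
  obtain b ls' where b: "ls = b # ls'" using comps_nonempty[OF assms(2,3)] by (cases ls) auto
  have g: "\<forall>z\<in>set (map2 (+) ks ls). 2 \<le> z" using map2_ge2 comps_ge1 assms by blast
  show ?thesis using g unfolding a b by force
qed

definition Rlim :: "real \<Rightarrow> nat \<Rightarrow> nat \<Rightarrow> real" where
  "Rlim \<tau> k l = (\<Sum>j = 1..k. (-1) ^ (j - 1) * (\<Sum>ks\<in>comps j k. \<Sum>ls\<in>comps j l. gm \<tau> (last ls) * mzv (map2 (+) ks ls)))"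

lemma Rr_tendsto: "(\<lambda>N. Rr \<tau> N k l) \<longlonglongrightarrow> Rlim \<tau> k l"
  unfolding Rr_def W_def Rlim_def
proof (intro tendsto_sum tendsto_mult tendsto_const)
  fix j ks ls assume j: "j \<in> {1..k}" and ks: "ks \<in> comps j k" and ls: "ls \<in> comps j l"
  obtain a r where e: "map2 (+) ks ls = a # r" and a: "2 \<le> a" and r: "\<forall>x\<in>set r. 1 \<le> x"
    using map2_shape[OF ks ls] j by auto
  show "(\<lambda>N. zN N (map2 (+) ks ls)) \<longlonglongrightarrow> mzv (map2 (+) ks ls)"
    unfolding e by (rule zN_conv[OF a r])
qed

lemma star_identity:
  assumes t: "0 \<le> \<tau>" "\<tau> \<le> 1" and k: "1 \<le> k" and l: "1 \<le> l"
  shows "(\<Sum>(p, c) \<leftarrow> merges (Suc k # replicate (l - 1) 1). \<tau> ^ c * mzv p) = Rlim \<tau> k l"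
proof -
  have k2: "2 \<le> Suc k" using k by simp
  have r1: "\<forall>x\<in>set (replicate (l - 1) (1::nat)). 1 \<le> x" by simp
  have A: "(\<lambda>N. zt \<tau> N (Suc k # replicate (l - 1) 1) + Err \<tau> N k l)
      \<longlonglongrightarrow> (\<Sum>(p, c) \<leftarrow> merges (Suc k # replicate (l - 1) 1). \<tau> ^ c * mzv p) + 0"
    by (intro tendsto_add zt_conv[OF k2 r1] Err_tendsto[OF t k])
  have B: "(\<lambda>N. zt \<tau> N (Suc k # replicate (l - 1) 1) + Err \<tau> N k l) \<longlonglongrightarrow> Rlim \<tau> k l"
    unfolding finite_identity[OF k l] by (rule Rr_tendsto)
  show ?thesis using LIMSEQ_unique[OF A B] by simp
qed

lemma poly_sum_list: "poly (\<Sum>x \<leftarrow> xs. f x) t = (\<Sum>x \<leftarrow> xs. poly (f x) t)"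
  by (induction xs) auto

lemma poly_zeta_t: "poly (zeta_t ks) t = (\<Sum>(p, c) \<leftarrow> merges ks. t ^ c * mzv p)"
  unfolding zeta_t_def poly_sum_list
  by (rule arg_cong[where f = sum_list], rule map_cong) (auto simp: poly_monom)

lemma poly_geom: "poly (geom l) t = gm t l"
  by (simp add: geom_def gm_def poly_sum poly_monom)

lemma sum_min_ext:
  fixes F :: "nat list \<Rightarrow> nat list \<Rightarrow> 'a::comm_ring_1"
  shows "(\<Sum>j = 1..min k l. (-1) ^ (j - 1) * (\<Sum>ks\<in>comps j k. \<Sum>ls\<in>comps j l. F ks ls))
   = (\<Sum>j = 1..k. (-1) ^ (j - 1) * (\<Sum>ks\<in>comps j k. \<Sum>ls\<in>comps j l. F ks ls))"
  by (rule sum.mono_neutral_left) (auto simp: comps_len_gt)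

lemma poly_eq_on_Icc:
  fixes p q :: "real poly"
  assumes "\<And>x. 0 \<le> x \<Longrightarrow> x \<le> 1 \<Longrightarrow> poly p x = poly q x"
  shows "p = q"
proof (rule ccontr)
  assume "p \<noteq> q"
  then have "p - q \<noteq> 0" by simp
  then have fin: "finite {x. poly (p - q) x = 0}" by (rule poly_roots_finite)
  have "{0..1::real} \<subseteq> {x. poly (p - q) x = 0}" using assms by auto
  then have "finite {0..1::real}" using fin finite_subset by blast
  then show False using infinite_Icc[of "0::real" 1] by simp
qed

theorem theorem3p6:
  fixes k l :: nat
  assumes "1 \<le> k" and "1 \<le> l"
  shows "(zeta_t (Suc k # replicate (l - 1) 1) =
           (\<Sum>j = 1..min k l. (-1) ^ (j - 1) *
              (\<Sum>ks\<in>comps j k. \<Sum>ls\<in>comps j l.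
                 geom (last ls) * Zt_comb (elt (map2 (+) ks ls))))) \<and>
         (zeta_t (Suc k # replicate (l - 1) 1) =
           (\<Sum>j = 1..min k l. (-1) ^ (j - 1) *
              (\<Sum>ks\<in>comps j k. \<Sum>ls\<in>comps j l.
                 geom (last ls) * [:mzv (map2 (+) ks ls):]))) \<and>
         (mzv_star (Suc k # replicate (l - 1) 1) =
           (\<Sum>j = 1..min k l. (-1) ^ (j - 1) *
              (\<Sum>ks\<in>comps j k. \<Sum>ls\<in>comps j l.
                 real (last ls) * mzv (map2 (+) ks ls))))"
proof -
  let ?ks0 = "Suc k # replicate (l - 1) 1"
  define RHS2 where "RHS2 = (\<Sum>j = 1..min k l. (-1) ^ (j - 1) *
              (\<Sum>ks\<in>comps j k. \<Sum>ls\<in>comps j l.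
                 geom (last ls) * [:mzv (map2 (+) ks ls):]))"
  have P2: "zeta_t ?ks0 = RHS2"
  proof (rule poly_eq_on_Icc)
    fix x :: real assume x: "0 \<le> x" "x \<le> 1"
    have "poly RHS2 x = (\<Sum>j = 1..min k l. (-1) ^ (j - 1) *
              (\<Sum>ks\<in>comps j k. \<Sum>ls\<in>comps j l. gm x (last ls) * mzv (map2 (+) ks ls)))"
      unfolding RHS2_def by (simp add: poly_sum poly_geom mult_ac)
    also have "\<dots> = Rlim x k l" unfolding Rlim_def by (rule sum_min_ext)
    also have "\<dots> = poly (zeta_t ?ks0) x"
      unfolding poly_zeta_t by (rule star_identity[OF x assms, symmetric])
    finally show "poly (zeta_t ?ks0) x = poly RHS2 x" by simp
  qed
  have P1: "(\<Sum>j = 1..min k l. (-1) ^ (j - 1) *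
              (\<Sum>ks\<in>comps j k. \<Sum>ls\<in>comps j l.
                 geom (last ls) * Zt_comb (elt (map2 (+) ks ls)))) = RHS2"
    unfolding RHS2_def
  proof (rule sum.cong[OF refl])
    fix j assume j: "j \<in> {1..min k l}"
    have "(\<Sum>ks\<in>comps j k. \<Sum>ls\<in>comps j l. geom (last ls) * Zt_comb (elt (map2 (+) ks ls)))
        = (\<Sum>ks\<in>comps j k. \<Sum>ls\<in>comps j l. geom (last ls) * [:mzv (map2 (+) ks ls):])"
    proof (rule sum.cong[OF refl], rule sum.cong[OF refl])
      fix ks ls assume ks: "ks \<in> comps j k" and ls: "ls \<in> comps j l"
      obtain a r where e: "map2 (+) ks ls = a # r" and a: "2 \<le> a" and r: "\<forall>x\<in>set r. 1 \<le> x"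
        using map2_shape[OF ks ls] j by auto
      have "Zt_comb (elt (map2 (+) ks ls)) = [:mzv (map2 (+) ks ls):]"
        unfolding e by (rule Zt_elt) (use a r in auto)
      then show "geom (last ls) * Zt_comb (elt (map2 (+) ks ls)) = geom (last ls) * [:mzv (map2 (+) ks ls):]"
        by simp
    qed
    then show "(-1) ^ (j - 1) * (\<Sum>ks\<in>comps j k. \<Sum>ls\<in>comps j l. geom (last ls) * Zt_comb (elt (map2 (+) ks ls)))
        = (-1) ^ (j - 1) * (\<Sum>ks\<in>comps j k. \<Sum>ls\<in>comps j l. geom (last ls) * [:mzv (map2 (+) ks ls):])"
      by simp
  qed
  have P3: "mzv_star ?ks0 = (\<Sum>j = 1..min k l. (-1) ^ (j - 1) *
              (\<Sum>ks\<in>comps j k. \<Sum>ls\<in>comps j l.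
                 real (last ls) * mzv (map2 (+) ks ls)))"
  proof -
    have k2: "2 \<le> Suc k" using assms by simp
    have r1: "\<forall>x\<in>set (replicate (l - 1) (1::nat)). 1 \<le> x" by simp
    have A: "(\<lambda>N. zsN N ?ks0) \<longlonglongrightarrow> mzv_star ?ks0" by (rule zsN_conv[OF k2 r1])
    have B: "(\<lambda>N. zsN N ?ks0) \<longlonglongrightarrow> (\<Sum>(p, c) \<leftarrow> merges ?ks0. 1 ^ c * mzv p)"
      unfolding zt_one[symmetric] by (rule zt_conv[OF k2 r1])
    have "mzv_star ?ks0 = (\<Sum>(p, c) \<leftarrow> merges ?ks0. 1 ^ c * mzv p)" by (rule LIMSEQ_unique[OF A B])
    also have "\<dots> = Rlim 1 k l" by (rule star_identity) (use assms in auto)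
    also have "\<dots> = (\<Sum>j = 1..min k l. (-1) ^ (j - 1) *
              (\<Sum>ks\<in>comps j k. \<Sum>ls\<in>comps j l. gm 1 (last ls) * mzv (map2 (+) ks ls)))"
      unfolding Rlim_def by (rule sum_min_ext[symmetric])
    also have "\<dots> = (\<Sum>j = 1..min k l. (-1) ^ (j - 1) *
              (\<Sum>ks\<in>comps j k. \<Sum>ls\<in>comps j l. real (last ls) * mzv (map2 (+) ks ls)))"
      by (simp add: gm_def)
    finally show ?thesis .
  qed
  show ?thesis using P1 P2 P3 unfolding RHS2_def by simp
qed

end
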